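(* Let $a,b,c$ be nonzero constants, $N\ge1$, and $p_i,q_j$ ($1\le i,j\le N$) nonzero constants with $p_i+q_j\neq0$, and $c_{ij}$ arbitrary constants. For integers $n,k,l,m$ let $$\tau_n(k,l,m)=\det\Big(c_{ij}+\frac{1}{p_i+q_j}\Big(-\frac{p_i}{q_j}\Big)^{n}\Big(\frac{1-ap_i}{1+aq_j}\Big)^{-k}\Big(\frac{1-bp_i^{-1}}{1+bq_j^{-1}}\Big)^{-l}\Big(\frac{1-cp_i}{1+cq_j}\Big)^{m}\Big)_{1\le i,j\le N},$$ or alternatively the Casorati determinant $\tau_n(k,l,m)=\det(\phi^{(i)}_{n+j-1}(k,l,m))_{1\le i,j\le N}$ with $$\phi^{(i)}_n(k,l,m)=c_ip_i^n(1-ap_i)^{-k}(1-bp_i^{-1})^{-l}(1-cp_i)^m+d_iq_i^n(1-aq_i)^{-k}(1-bq_i^{-1})^{-l}(1-cq_i)^m$$ ($c_i,d_i$ arbitrary constants). Then $\tau_n(k,l,m)$ satisfies $$\tau_n(k,l+1,m)\tau_n(k,l,m-1)-bc\,\tau_{n+1}(k,l,m-1)\tau_{n-1}(k,l+1,m)=(1-bc)\tau_n(k,l,m)\tau_n(k,l+1,m-1),$$ $$\tau_{n+1}(k,l,m-1)\tau_n(k+1,l,m)-ac^{-1}\tau_{n+1}(k+1,l,m)\tau_n(k,l,m-1)=(1-ac^{-1})\tau_n(k,l,m)\tau_{n+1}(k+1,l,m-1).$$ *)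

theory Defs
  imports Complex_Main "Jordan_Normal_Form.Determinant"
begin

text \<open>Gram-type tau function. Indices i, j run over 0..N-1 (shifted from 1..N).\<close>
definition tau_gram ::
  "complex \<Rightarrow> complex \<Rightarrow> complex \<Rightarrow> nat \<Rightarrow> (nat \<Rightarrow> complex) \<Rightarrow> (nat \<Rightarrow> complex)
   \<Rightarrow> (nat \<Rightarrow> nat \<Rightarrow> complex) \<Rightarrow> int \<Rightarrow> int \<Rightarrow> int \<Rightarrow> int \<Rightarrow> complex" where
  "tau_gram a b c N p q C n k l m =
     det (mat N N (\<lambda>(i,j). C i j + 1 / (p i + q j)
        * (- p i / q j) powi n
        * ((1 - a * p i) / (1 + a * q j)) powi (- k)
        * ((1 - b / p i) / (1 + b / q j)) powi (- l)
        * ((1 - c * p i) / (1 + c * q j)) powi m))"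

definition phi ::
  "complex \<Rightarrow> complex \<Rightarrow> complex \<Rightarrow> (nat \<Rightarrow> complex) \<Rightarrow> (nat \<Rightarrow> complex)
   \<Rightarrow> (nat \<Rightarrow> complex) \<Rightarrow> (nat \<Rightarrow> complex) \<Rightarrow> nat \<Rightarrow> int \<Rightarrow> int \<Rightarrow> int \<Rightarrow> int \<Rightarrow> complex" where
  "phi a b c p q cc d i n k l m =
     cc i * p i powi n * (1 - a * p i) powi (- k) * (1 - b / p i) powi (- l) * (1 - c * p i) powi m
   + d i * q i powi n * (1 - a * q i) powi (- k) * (1 - b / q i) powi (- l) * (1 - c * q i) powi m"

text \<open>Casorati tau function: det (phi^(i)_(n+j-1)) with 1-based i,j, i.e. phi^(i)_(n+j) 0-based.\<close>
definition tau_cas ::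
  "complex \<Rightarrow> complex \<Rightarrow> complex \<Rightarrow> nat \<Rightarrow> (nat \<Rightarrow> complex) \<Rightarrow> (nat \<Rightarrow> complex)
   \<Rightarrow> (nat \<Rightarrow> complex) \<Rightarrow> (nat \<Rightarrow> complex) \<Rightarrow> int \<Rightarrow> int \<Rightarrow> int \<Rightarrow> int \<Rightarrow> complex" where
  "tau_cas a b c N p q cc d n k l m =
     det (mat N N (\<lambda>(i,j). phi a b c p q cc d i (n + int j) k l m))"

definition bilinear_eqs ::
  "complex \<Rightarrow> complex \<Rightarrow> complex \<Rightarrow> (int \<Rightarrow> int \<Rightarrow> int \<Rightarrow> int \<Rightarrow> complex) \<Rightarrow> bool" where
  "bilinear_eqs a b c tau \<longleftrightarrow> (\<forall>n k l m.
     tau n k (l+1) m * tau n k l (m-1) - b * c * tau (n+1) k l (m-1) * tau (n-1) k (l+1) m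
       = (1 - b * c) * tau n k l m * tau n k (l+1) (m-1)
   \<and> tau (n+1) k l (m-1) * tau n (k+1) l m - a / c * tau (n+1) (k+1) l m * tau n k l (m-1)
       = (1 - a / c) * tau n k l m * tau (n+1) (k+1) l (m-1))"

end

theory Submission
  imports Defs
begin


lemma det2: assumes "A \<in> carrier_mat 2 2"
  shows "det A = A $$ (0,0) * A $$ (1,1) - A $$ (0,1) * A $$ (1,0)"
proof -
  have "det A = (\<Sum>i<2. A $$ (i,0) * cofactor A i 0)"
    by (rule laplace_expansion_column[OF assms], simp)
  also have "\<dots> = A $$ (0,0) * cofactor A 0 0 + A $$ (1,0) * cofactor A 1 0"
    by (simp add: numeral_2_eq_2)
  also have "cofactor A 0 0 = A $$ (1,1)"
    unfolding cofactor_def using assms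
    by (subst det_single, auto simp: mat_delete_def)
  also have "cofactor A 1 0 = - A $$ (0,1)"
    unfolding cofactor_def using assms
    by (subst det_single, auto simp: mat_delete_def)
  finally show ?thesis by (simp add: algebra_simps)
qed


lemma almost_id_det:
  fixes W :: "complex mat"
  assumes W: "W \<in> carrier_mat d d" and d: "2 \<le> d"
    and u: "\<And>i j. i < d \<Longrightarrow> j < d - 2 \<Longrightarrow> W $$ (i,j) = (if i = j then 1 else 0)"
  shows "det W = W $$ (d-2,d-2) * W $$ (d-1,d-1) - W $$ (d-2,d-1) * W $$ (d-1,d-2)"
proof -
  obtain k where dk: "d = k + 2" using d by (metis add.commute le_iff_add)
  have u': "\<And>i j. i < k + 2 \<Longrightarrow> j < k \<Longrightarrow> W $$ (i,j) = (if i = j then 1 else 0)"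
    using u dk by auto
  have W': "W \<in> carrier_mat (k+2) (k+2)" using W dk by simp
  define W2 where "W2 = mat k 2 (\<lambda>(i,j). W $$ (i, k + j))"
  define W4 where "W4 = mat 2 2 (\<lambda>(i,j). W $$ (k + i, k + j))"
  have eq: "W = four_block_mat (1\<^sub>m k) W2 (0\<^sub>m 2 k) W4"
  proof (rule eq_matI)
    fix i j assume i: "i < dim_row (four_block_mat (1\<^sub>m k) W2 (0\<^sub>m 2 k) W4)"
      and j: "j < dim_col (four_block_mat (1\<^sub>m k) W2 (0\<^sub>m 2 k) W4)"
    hence i2: "i < k + 2" and j2: "j < k + 2" by (auto simp: W4_def)
    show "W $$ (i,j) = four_block_mat (1\<^sub>m k) W2 (0\<^sub>m 2 k) W4 $$ (i,j)"
      using i j i2 j2 u'[OF i2] by (cases "i < k"; cases "j < k") (auto simp: W2_def W4_def)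
  qed (insert W', auto simp: W4_def)
  have "det W = det (1\<^sub>m k) * det W4"
    unfolding eq by (rule det_four_block_mat_lower_left_zero, auto simp: W2_def W4_def)
  also have "\<dots> = det W4" by simp
  also have "\<dots> = W4 $$ (0,0) * W4 $$ (1,1) - W4 $$ (0,1) * W4 $$ (1,0)"
    by (rule det2, simp add: W4_def)
  finally show ?thesis by (simp add: W4_def dk)
qed

definition pmat :: "nat \<Rightarrow> (nat \<Rightarrow> nat \<Rightarrow> complex) \<Rightarrow> (nat \<Rightarrow> complex) \<Rightarrow> (nat \<Rightarrow> complex) \<Rightarrow> complex mat" where
  "pmat d c x y = mat d d (\<lambda>(i,j). if j < d - 2 then c i j else if j = d - 2 then x i else y i)"

definition pdet where "pdet d c x y = det (pmat d c x y)"

lemma pmat_carrier[simp]: "pmat d c x y \<in> carrier_mat d d" by (simp add: pmat_def)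

lemma pdet_coords:
  assumes d: "2 \<le> d" and nz: "pdet d c a b \<noteq> 0"
  shows "\<exists>K f g. \<forall>x y. pdet d c x y = K * (f x * g y - g x * f y)"
proof -
  define A where "A = pmat d c a b"
  define D where "D = det A"
  have A: "A \<in> carrier_mat d d" by (simp add: A_def)
  have DZ: "D \<noteq> 0" using nz by (simp add: D_def A_def pdet_def)
  define B where "B = (1 / D) \<cdot>\<^sub>m adj_mat A"
  have B: "B \<in> carrier_mat d d" using adj_mat[OF A] by (simp add: B_def)
  have sm: "(1 / D) \<cdot>\<^sub>m (D \<cdot>\<^sub>m 1\<^sub>m d) = 1\<^sub>m d"
    by (rule eq_matI, insert DZ, auto)
  have BA: "B * A = 1\<^sub>m d" using adj_mat[OF A] A DZ sm
    by (simp add: B_def D_def mult_smult_assoc_mat)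
  have AB: "A * B = 1\<^sub>m d" using adj_mat[OF A] A DZ sm
    by (simp add: B_def D_def mult_smult_distrib)
  define f where "f x = (B *\<^sub>v vec d x) $ (d-2)" for x
  define g where "g x = (B *\<^sub>v vec d x) $ (d-1)" for x
  have "pdet d c x y = D * (f x * g y - g x * f y)" for x y
  proof -
    define Z where "Z = pmat d c x y"
    have Z: "Z \<in> carrier_mat d d" by (simp add: Z_def)
    have "Z = (A * B) * Z" using AB Z by simp
    also have "\<dots> = A * (B * Z)" using A B Z by (simp add: assoc_mult_mat)
    finally have "det Z = D * det (B * Z)" 
      using A B Z by (metis D_def det_mult mult_carrier_mat)
    moreover have "det (B * Z) = (B * Z) $$ (d-2,d-2) * (B * Z) $$ (d-1,d-1) - (B * Z) $$ (d-2,d-1) * (B * Z) $$ (d-1,d-2)"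
    proof (rule almost_id_det[OF _ d])
      show "B * Z \<in> carrier_mat d d" using B Z by simp
      fix i j assume i: "i < d" and j: "j < d - 2"
      have "(B * Z) $$ (i,j) = row B i \<bullet> col Z j" using B Z i j by simp
      also have "col Z j = col A j" using j by (auto simp: Z_def A_def pmat_def)
      also have "row B i \<bullet> col A j = (B * A) $$ (i,j)" using B A i j by simp
      finally show "(B * Z) $$ (i,j) = (if i = j then 1 else 0)" using BA i j by simp
    qed
    moreover have "(B * Z) $$ (i, d-2) = (B *\<^sub>v vec d x) $ i" if "i < d" for i
    proof -
      have "col Z (d-2) = vec d x" using d by (auto simp: Z_def pmat_def)
      thus ?thesis using that B Z d by (simp add: mult_mat_vec_def)
    qed
    moreover have "(B * Z) $$ (i, d-1) = (B *\<^sub>v vec d y) $ i" if "i < d" for i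
    proof -
      have h: "\<not> (d - Suc 0 < d - 2)" "d - Suc 0 \<noteq> d - 2" using d by auto
      have "col Z (d-1) = vec d y" using d h by (auto simp: Z_def pmat_def)
      thus ?thesis using that B Z d by (simp add: mult_mat_vec_def)
    qed
    ultimately show ?thesis using d unfolding f_def g_def Z_def pdet_def
      by (simp add: algebra_simps)
  qed
  thus ?thesis by blast
qed

lemma pluecker:
  assumes d: "2 \<le> d"
  shows "pdet d c x1 x2 * pdet d c x3 x4 - pdet d c x1 x3 * pdet d c x2 x4
       + pdet d c x1 x4 * pdet d c x2 x3 = 0"
proof (cases "\<exists>a b. pdet d c a b \<noteq> 0")
  case True
  then obtain a b where "pdet d c a b \<noteq> 0" by blast
  from pdet_coords[OF d this] obtain K f g where 
    e: "\<And>x y. pdet d c x y = K * (f x * g y - g x * f y)" by blast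
  show ?thesis unfolding e by (simp add: algebra_simps)
next
  case False thus ?thesis by auto
qed


lemma pdet_swap:
  assumes d: "2 \<le> d"
  shows "pdet d c y x = - pdet d c x y"
proof -
  have "pmat d c y x = swapcols (d-2) (d-1) (pmat d c x y)"
    by (rule eq_matI, insert d, auto simp: pmat_def)
  thus ?thesis unfolding pdet_def using d
    by (simp add: det_swapcols[where n=d])
qed

lemma pdet_same: assumes d: "2 \<le> d" shows "pdet d c x x = 0"
  using pdet_swap[OF d, of c x x] by simp

lemma pdet_lin1:
  assumes d: "2 \<le> d"
  shows "pdet d c (\<lambda>i. s * u i + t * v i) w = s * pdet d c u w + t * pdet d c v w"
proof -
  have cof: "cofactor (pmat d c x w) i (d-2) = cofactor (pmat d c y w) i (d-2)" for x y i
    unfolding cofactor_def mat_delete_def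
    by (rule arg_cong[where f="\<lambda>M. _ * det M"], rule eq_matI, insert d, auto simp: pmat_def)
  have lap: "pdet d c x w = (\<Sum>i<d. x i * cofactor (pmat d c u w) i (d-2))" for x
  proof -
    have "pdet d c x w = (\<Sum>i<d. pmat d c x w $$ (i,d-2) * cofactor (pmat d c x w) i (d-2))"
      unfolding pdet_def by (rule laplace_expansion_column, insert d, auto)
    also have "\<dots> = (\<Sum>i<d. x i * cofactor (pmat d c u w) i (d-2))"
      by (rule sum.cong, insert d cof, auto simp: pmat_def)
    finally show ?thesis .
  qed
  show ?thesis unfolding lap
    by (simp add: sum.distrib sum_distrib_left algebra_simps)
qed

lemma pdet_lin2:
  assumes d: "2 \<le> d"
  shows "pdet d c w (\<lambda>i. s * u i + t * v i) = s * pdet d c w u + t * pdet d c w v"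
  using pdet_lin1[OF d, of c s u t v w] pdet_swap[OF d] by (metis (no_types) add_uminus_conv_diff
      mult_minus_right minus_add_distrib)

lemma pdet_comb:
  assumes d: "2 \<le> d"
  shows "pdet d c (\<lambda>i. k1 * x1 i + k2 * x2 i + k3 * x3 i + k4 * x4 i)
                  (\<lambda>i. l1 * x1 i + l2 * x2 i + l3 * x3 i + l4 * x4 i)
   = (k1*l2 - k2*l1) * pdet d c x1 x2 + (k1*l3 - k3*l1) * pdet d c x1 x3
   + (k1*l4 - k4*l1) * pdet d c x1 x4 + (k2*l3 - k3*l2) * pdet d c x2 x3
   + (k2*l4 - k4*l2) * pdet d c x2 x4 + (k3*l4 - k4*l3) * pdet d c x3 x4"
proof -
  have L1: "pdet d c (\<lambda>i. s * u i + t * v i) w = s * pdet d c u w + t * pdet d c v w" for s t u v w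
    by (rule pdet_lin1[OF d])
  have L2: "pdet d c w (\<lambda>i. s * u i + t * v i) = s * pdet d c w u + t * pdet d c w v" for s t u v w
    by (rule pdet_lin2[OF d])
  have S: "pdet d c y x = - pdet d c x y" for x y by (rule pdet_swap[OF d])
  have Z: "pdet d c x x = 0" for x by (rule pdet_same[OF d])
  define A where "A = (\<lambda>i. k1 * x1 i + k2 * x2 i + k3 * x3 i + k4 * x4 i)"
  define B where "B = (\<lambda>i. l1 * x1 i + l2 * x2 i + l3 * x3 i + l4 * x4 i)"
  have e4: "(\<lambda>i. m1 * y1 i + m2 * y2 i + m3 * y3 i + m4 * y4 i) =
     (\<lambda>i. 1 * (\<lambda>i. 1 * (\<lambda>i. m1 * y1 i + m2 * y2 i) i + m3 * y3 i) i + m4 * y4 i)" for m1 m2 m3 m4 :: complex and y1 y2 y3 y4 :: "nat \<Rightarrow> complex"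
    by simp
  have pa: "pdet d c A w = k1 * pdet d c x1 w + k2 * pdet d c x2 w + k3 * pdet d c x3 w + k4 * pdet d c x4 w" for w
    unfolding A_def e4 L1 by simp
  have pb: "pdet d c w B = l1 * pdet d c w x1 + l2 * pdet d c w x2 + l3 * pdet d c w x3 + l4 * pdet d c w x4" for w
    unfolding B_def e4 L2 by simp
  show ?thesis unfolding A_def[symmetric] B_def[symmetric] pa pb
    using S[of x1 x2] S[of x1 x3] S[of x1 x4] S[of x2 x3] S[of x2 x4] S[of x3 x4] Z[of x1] Z[of x2] Z[of x3] Z[of x4]
    by (simp add: algebra_simps)
qed


lemma mix_det:
  fixes P Q :: "nat \<Rightarrow> nat \<Rightarrow> complex"
  assumes r: "r < N"
    and h1: "\<And>j i. j < r \<Longrightarrow> i < N \<Longrightarrow> P j i = Q j i - \<beta> * Q (Suc j) i"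
    and h2: "\<And>j i. r \<le> j \<Longrightarrow> j < N \<Longrightarrow> i < N \<Longrightarrow> P j i = Q j i"
  shows "det (mat N N (\<lambda>(i,j). P j i)) = det (mat N N (\<lambda>(i,j). Q j i))"
proof -
  define U where "U = mat N N (\<lambda>(i,j). if i = j then 1 else if i = Suc j \<and> j < r then - \<beta> else (0::complex))"
  have U: "U \<in> carrier_mat N N" by (simp add: U_def)
  have eq: "mat N N (\<lambda>(i,j). P j i) = mat N N (\<lambda>(i,j). Q j i) * U"
  proof (rule eq_matI)
    fix i j assume i: "i < dim_row (mat N N (\<lambda>(i,j). Q j i) * U)" and j: "j < dim_col (mat N N (\<lambda>(i,j). Q j i) * U)"
    hence i: "i < N" and j: "j < N" by (auto simp: U_def)
    have "(mat N N (\<lambda>(i,j). Q j i) * U) $$ (i,j) = (\<Sum>l\<in>{0..<N}. Q l i * U $$ (l,j))"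
      using i j U by (simp add: scalar_prod_def)
    also have "\<dots> = (\<Sum>l\<in>{0..<N}. (if l = j then Q j i else 0) + (if l = Suc j then (if j < r then - \<beta> * Q (Suc j) i else 0) else 0))"
      by (rule sum.cong, auto simp: U_def j)
    also have "\<dots> = Q j i + (if Suc j < N then (if j < r then - \<beta> * Q (Suc j) i else 0) else 0)"
      using j by (simp add: sum.distrib)
    also have "\<dots> = P j i" using h1[of j i] h2[of j i] i j r by auto
    finally show "mat N N (\<lambda>(i,j). P j i) $$ (i,j) = (mat N N (\<lambda>(i,j). Q j i) * U) $$ (i,j)"
      using i j by simp
  qed (auto simp: U_def)
  have "det U = 1"
    by (subst det_lower_triangular[OF _ U], auto simp: U_def prod_list_diag_prod)
  thus ?thesis unfolding eq using U by (simp add: det_mult[where n=N])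
qed

lemma det_front:
  assumes N: "2 \<le> N"
  shows "det (mat N N (\<lambda>(i,j). if j = 0 then u i else if j < N - 1 then c i (j - 1) else w i))
    = (-1)^(N-2) * pdet N c u w"
proof -
  have "swap_col_to_front (pmat N c u w) (N-2) = mat N N (\<lambda>(i,j). if j = 0 then u i else if j < N - 1 then c i (j - 1) else w i)"
    by (subst swap_col_to_front_result[of _ N N], insert N, auto simp: pmat_def intro!: eq_matI)
  moreover have "det (swap_col_to_front (pmat N c u w) (N-2)) = (-1)^(N-2) * pdet N c u w"
    unfolding pdet_def by (rule swap_col_to_front_det[of _ N], insert N, auto)
  ultimately show ?thesis by simp
qed


definition cdet :: "nat \<Rightarrow> (int \<Rightarrow> int \<Rightarrow> int \<Rightarrow> nat \<Rightarrow> complex) \<Rightarrow> int \<Rightarrow> int \<Rightarrow> int \<Rightarrow> complex" where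
  "cdet N F s x y = det (mat N N (\<lambda>(i,j). F (s + int j) x y i))"

lemma det_mat_cong:
  assumes "\<And>i j. i < N \<Longrightarrow> j < N \<Longrightarrow> f (i,j) = g (i,j)"
  shows "det (mat N N f) = det (mat N N g)"
  by (rule arg_cong[where f=det], rule eq_matI, insert assms, auto)

lemma alg1:
  fixes \<alpha> \<gamma> k1 k xx m1 mm km :: complex
  assumes "\<alpha> * k1 = k - xx" "\<gamma> * m1 = mm - xx" "(\<alpha> - \<gamma>) * km = k - mm"
  shows "\<gamma> * m1 * k - \<alpha> * k1 * mm = (\<gamma> - \<alpha>) * xx * km"
proof -
  have k: "k = \<alpha> * k1 + xx" using assms(1) by simp
  have m: "mm = \<gamma> * m1 + xx" using assms(2) by simp
  have km: "(\<gamma> - \<alpha>) * km = \<gamma> * m1 - \<alpha> * k1"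
    using assms(3) k m by (simp add: algebra_simps)
  have l: "\<gamma> * m1 * k - \<alpha> * k1 * mm = xx * (\<gamma> * m1 - \<alpha> * k1)"
    unfolding k m by (simp add: algebra_simps)
  have r: "(\<gamma> - \<alpha>) * xx * km = xx * ((\<gamma> - \<alpha>) * km)" by simp
  show ?thesis unfolding l r km ..
qed

lemma alg2:
  fixes \<alpha> \<gamma> t4 t5 t6 p12 p13 p14 p23 p24 p34 s :: complex
  assumes "\<gamma> * t5 = p24" "\<alpha> * t4 = p23" "(\<alpha> - \<gamma>) * t6 = - p34"
    "p12 * p34 - p13 * p24 + p14 * p23 = 0"
  shows "\<gamma> * t5 * (s * p13) - \<alpha> * t4 * (s * p14) = (\<gamma> - \<alpha>) * (s * p12) * t6"
proof -
  have l: "\<gamma> * t5 * (s * p13) - \<alpha> * t4 * (s * p14) = s * ((\<gamma> * t5) * p13 - (\<alpha> * t4) * p14)"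
    by (simp add: algebra_simps)
  have r: "(\<gamma> - \<alpha>) * (s * p12) * t6 = - (s * p12 * ((\<alpha> - \<gamma>) * t6))"
    by (simp add: algebra_simps)
  have pl: "p24 * p13 - p23 * p14 = p12 * p34" using assms(4) by (simp add: algebra_simps)
  have e: "p24 * (s * p13) - p23 * (s * p14) = s * (p24 * p13 - p23 * p14)" by (simp add: algebra_simps)
  show ?thesis unfolding l r assms(1-3) e pl by simp
qed

lemma alg3:
  fixes \<alpha> \<gamma> a b c d e f :: complex
  assumes "\<gamma> \<noteq> 0" "\<gamma> * a * b - \<alpha> * c * d = (\<gamma> - \<alpha>) * e * f"
  shows "a * b - \<alpha> / \<gamma> * c * d = (1 - \<alpha> / \<gamma>) * e * f"
proof -
  have "\<gamma> * (a * b - \<alpha> / \<gamma> * c * d) = \<gamma> * a * b - \<alpha> * c * d"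
    using assms(1) by (simp add: algebra_simps)
  also have "\<dots> = \<gamma> * ((1 - \<alpha> / \<gamma>) * e * f)"
    unfolding assms(2) using assms(1) by (simp add: algebra_simps)
  finally show ?thesis using assms(1) by simp
qed

lemma cas_generic:
  fixes F :: "int \<Rightarrow> int \<Rightarrow> int \<Rightarrow> nat \<Rightarrow> complex"
  assumes N: "1 \<le> N" and al: "\<alpha> \<noteq> 0" and ga: "\<gamma> \<noteq> 0"
    and hx: "\<And>s x y i. F s x y i = F s (x+1) y i - \<alpha> * F (s+1) (x+1) y i"
    and hy: "\<And>s x y i. F s x y i = F s x (y-1) i - \<gamma> * F (s+1) x (y-1) i"
  shows "cdet N F (n+1) x (y-1) * cdet N F n (x+1) y - \<alpha>/\<gamma> * cdet N F (n+1) (x+1) y * cdet N F n x (y-1)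
       = (1 - \<alpha>/\<gamma>) * cdet N F n x y * cdet N F (n+1) (x+1) (y-1)"
proof -
  have hK: "F s (x+1) y i = F s (x+1) (y-1) i - \<gamma> * F (s+1) (x+1) (y-1) i" for s i
    using hy[of s "x+1" y i] .
  have hM: "F s x (y-1) i = F s (x+1) (y-1) i - \<alpha> * F (s+1) (x+1) (y-1) i" for s i
    using hx[of s x "y-1" i] .
  have diff: "F s (x+1) y i - F s x (y-1) i = (\<alpha> - \<gamma>) * F (s+1) (x+1) (y-1) i" for s i
    using hK[of s i] hM[of s i] by (simp add: algebra_simps)
  have r1: "F (s+1) (x+1) y i = (1/\<alpha>) * F s (x+1) y i + (-1/\<alpha>) * F s x y i" for s i
    using hx[of s x y i] al by (simp add: field_simps)
  have r2: "F (s+1) x (y-1) i = (1/\<gamma>) * F s x (y-1) i + (-1/\<gamma>) * F s x y i" for s i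
    using hy[of s x y i] ga by (simp add: field_simps)
  show ?thesis
  proof (cases "\<alpha> = \<gamma>")
    case True
    have "F s (x+1) y = F s x (y-1)" for s using diff[of s] True by (auto simp: fun_eq_iff)
    thus ?thesis using True ga by (simp add: cdet_def)
  next
    case neq: False
    have nz: "\<alpha> - \<gamma> \<noteq> 0" using neq by simp
    have r3: "F (s+1) (x+1) (y-1) i = (1/(\<alpha>-\<gamma>)) * F s (x+1) y i + (-1/(\<alpha>-\<gamma>)) * F s x (y-1) i" for s i
    proof -
      have nz: "\<alpha> - \<gamma> \<noteq> 0" using neq by simp
      have "F (s+1) (x+1) (y-1) i = (F s (x+1) y i - F s x (y-1) i) / (\<alpha> - \<gamma>)"
        using diff[of s i] nz by (simp add: eq_divide_eq mult.commute)
      thus ?thesis by (simp add: diff_divide_distrib)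
    qed
    have key: "\<gamma> * cdet N F (n+1) x (y-1) * cdet N F n (x+1) y - \<alpha> * cdet N F (n+1) (x+1) y * cdet N F n x (y-1)
       = (\<gamma> - \<alpha>) * cdet N F n x y * cdet N F (n+1) (x+1) (y-1)"
    proof (cases "N = 1")
      case True
      have c1: "cdet N F s x' y' = F s x' y' 0" for s x' y'
        unfolding cdet_def True by (subst det_single, auto)
      have e1: "\<alpha> * F (n+1) (x+1) y 0 = F n (x+1) y 0 - F n x y 0" using hx[of n x y 0] by simp
      have e2: "\<gamma> * F (n+1) x (y-1) 0 = F n x (y-1) 0 - F n x y 0" using hy[of n x y 0] by simp
      have e3: "(\<alpha> - \<gamma>) * F (n+1) (x+1) (y-1) 0 = F n (x+1) y 0 - F n x (y-1) 0" using diff[of n 0] by simp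
      show ?thesis unfolding c1 by (rule alg1[OF e1 e2 e3])
    next
      case False
      then obtain M where NM: "N = M + 2" using N by (metis add.commute le_add_diff_inverse2 le_antisym not_less_eq_eq one_add_one plus_1_eq_Suc)
      have N2: "2 \<le> N" using NM by simp
      define c where "c = (\<lambda>i j. F (n + 1 + int j) x y i)"
      define s0 where "s0 = n + int M + 1"
      define D where "D = pdet N c"
      note cdef = c_def s0_def NM
      have ix: "n + (1 + int M) = n + int M + 1" "n + (2 + int M) = n + int M + 1 + 1"
        "n + 1 + (1 + int M) = n + int M + 1 + 1" "n + 1 + int M = n + int M + 1" by simp_all
      have T1: "cdet N F n x y = (-1)^M * D (F n x y) (F s0 x y)"
      proof -
        have "cdet N F n x y = det (mat N N (\<lambda>(i,j). if j = 0 then F n x y i else if j < N - 1 then c i (j - 1) else F s0 x y i))"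
          unfolding cdet_def by (rule det_mat_cong, auto simp: cdef of_nat_diff less_Suc_eq ix)
        thus ?thesis unfolding det_front[OF N2] D_def by (simp add: NM)
      qed
      have T2: "cdet N F n (x+1) y = (-1)^M * D (F n x y) (F s0 (x+1) y)"
      proof -
        have "cdet N F n (x+1) y = det (mat N N (\<lambda>(i,j). (\<lambda>j i. if j < M + 1 then F (n + int j) x y i else F (n + int j) (x+1) y i) j i))"
        proof -
          have "det (mat N N (\<lambda>(i,j). (\<lambda>j i. if j < M + 1 then F (n + int j) x y i else F (n + int j) (x+1) y i) j i)) = det (mat N N (\<lambda>(i,j). (\<lambda>j i. F (n + int j) (x+1) y i) j i))"
          proof (rule mix_det[where r="M+1" and \<beta>=\<alpha>])
            show "M+1 < N" by (simp add: NM)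
          next
            fix j i assume j: "j < M+1" and i: "i < N"
            show "(\<lambda>j i. if j < M + 1 then F (n + int j) x y i else F (n + int j) (x+1) y i) j i = (\<lambda>j i. F (n + int j) (x+1) y i) j i - \<alpha> * (\<lambda>j i. F (n + int j) (x+1) y i) (Suc j) i" using j hx[of "n + int j" x y i] by (simp add: ac_simps)
          next
            fix j i assume j: "M+1 \<le> j" "j < N" and i: "i < N"
            show "(\<lambda>j i. if j < M + 1 then F (n + int j) x y i else F (n + int j) (x+1) y i) j i = (\<lambda>j i. F (n + int j) (x+1) y i) j i" using j by (simp add: NM)
          qed
          thus ?thesis by (simp add: cdet_def)
        qed
        also have "\<dots> = det (mat N N (\<lambda>(i,j). if j = 0 then F n x y i else if j < N - 1 then c i (j - 1) else F s0 (x+1) y i))"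
          by (rule det_mat_cong, auto simp: cdef of_nat_diff less_Suc_eq ix)
        finally show ?thesis unfolding det_front[OF N2] D_def by (simp add: NM)
      qed
      have T3: "cdet N F n x (y-1) = (-1)^M * D (F n x y) (F s0 x (y-1))"
      proof -
        have "cdet N F n x (y-1) = det (mat N N (\<lambda>(i,j). (\<lambda>j i. if j < M + 1 then F (n + int j) x y i else F (n + int j) x (y-1) i) j i))"
        proof -
          have "det (mat N N (\<lambda>(i,j). (\<lambda>j i. if j < M + 1 then F (n + int j) x y i else F (n + int j) x (y-1) i) j i)) = det (mat N N (\<lambda>(i,j). (\<lambda>j i. F (n + int j) x (y-1) i) j i))"
          proof (rule mix_det[where r="M+1" and \<beta>=\<gamma>])
            show "M+1 < N" by (simp add: NM)
          next
            fix j i assume j: "j < M+1" and i: "i < N"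
            show "(\<lambda>j i. if j < M + 1 then F (n + int j) x y i else F (n + int j) x (y-1) i) j i = (\<lambda>j i. F (n + int j) x (y-1) i) j i - \<gamma> * (\<lambda>j i. F (n + int j) x (y-1) i) (Suc j) i" using j hy[of "n + int j" x y i] by (simp add: ac_simps)
          next
            fix j i assume j: "M+1 \<le> j" "j < N" and i: "i < N"
            show "(\<lambda>j i. if j < M + 1 then F (n + int j) x y i else F (n + int j) x (y-1) i) j i = (\<lambda>j i. F (n + int j) x (y-1) i) j i" using j by (simp add: NM)
          qed
          thus ?thesis by (simp add: cdet_def)
        qed
        also have "\<dots> = det (mat N N (\<lambda>(i,j). if j = 0 then F n x y i else if j < N - 1 then c i (j - 1) else F s0 x (y-1) i))"
          by (rule det_mat_cong, auto simp: cdef of_nat_diff less_Suc_eq ix)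
        finally show ?thesis unfolding det_front[OF N2] D_def by (simp add: NM)
      qed
      have T4: "cdet N F (n+1) (x+1) y = D (F s0 x y) (F (s0+1) (x+1) y)"
      proof -
        have "cdet N F (n+1) (x+1) y = det (mat N N (\<lambda>(i,j). (\<lambda>j i. if j < M + 1 then F (n + 1 + int j) x y i else F (n + 1 + int j) (x+1) y i) j i))"
        proof -
          have "det (mat N N (\<lambda>(i,j). (\<lambda>j i. if j < M + 1 then F (n + 1 + int j) x y i else F (n + 1 + int j) (x+1) y i) j i)) = det (mat N N (\<lambda>(i,j). (\<lambda>j i. F (n + 1 + int j) (x+1) y i) j i))"
          proof (rule mix_det[where r="M+1" and \<beta>=\<alpha>])
            show "M+1 < N" by (simp add: NM)
          next
            fix j i assume j: "j < M+1" and i: "i < N"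
            show "(\<lambda>j i. if j < M + 1 then F (n + 1 + int j) x y i else F (n + 1 + int j) (x+1) y i) j i = (\<lambda>j i. F (n + 1 + int j) (x+1) y i) j i - \<alpha> * (\<lambda>j i. F (n + 1 + int j) (x+1) y i) (Suc j) i" using j hx[of "n + 1 + int j" x y i] by (simp add: ac_simps)
          next
            fix j i assume j: "M+1 \<le> j" "j < N" and i: "i < N"
            show "(\<lambda>j i. if j < M + 1 then F (n + 1 + int j) x y i else F (n + 1 + int j) (x+1) y i) j i = (\<lambda>j i. F (n + 1 + int j) (x+1) y i) j i" using j by (simp add: NM)
          qed
          thus ?thesis by (simp add: cdet_def)
        qed
        also have "\<dots> = D (F s0 x y) (F (s0+1) (x+1) y)"
          unfolding D_def pdet_def pmat_def
          by (rule det_mat_cong, auto simp: cdef less_Suc_eq ix)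
        finally show ?thesis .
      qed
      have T5: "cdet N F (n+1) x (y-1) = D (F s0 x y) (F (s0+1) x (y-1))"
      proof -
        have "cdet N F (n+1) x (y-1) = det (mat N N (\<lambda>(i,j). (\<lambda>j i. if j < M + 1 then F (n + 1 + int j) x y i else F (n + 1 + int j) x (y-1) i) j i))"
        proof -
          have "det (mat N N (\<lambda>(i,j). (\<lambda>j i. if j < M + 1 then F (n + 1 + int j) x y i else F (n + 1 + int j) x (y-1) i) j i)) = det (mat N N (\<lambda>(i,j). (\<lambda>j i. F (n + 1 + int j) x (y-1) i) j i))"
          proof (rule mix_det[where r="M+1" and \<beta>=\<gamma>])
            show "M+1 < N" by (simp add: NM)
          next
            fix j i assume j: "j < M+1" and i: "i < N"
            show "(\<lambda>j i. if j < M + 1 then F (n + 1 + int j) x y i else F (n + 1 + int j) x (y-1) i) j i = (\<lambda>j i. F (n + 1 + int j) x (y-1) i) j i - \<gamma> * (\<lambda>j i. F (n + 1 + int j) x (y-1) i) (Suc j) i" using j hy[of "n + 1 + int j" x y i] by (simp add: ac_simps)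
          next
            fix j i assume j: "M+1 \<le> j" "j < N" and i: "i < N"
            show "(\<lambda>j i. if j < M + 1 then F (n + 1 + int j) x y i else F (n + 1 + int j) x (y-1) i) j i = (\<lambda>j i. F (n + 1 + int j) x (y-1) i) j i" using j by (simp add: NM)
          qed
          thus ?thesis by (simp add: cdet_def)
        qed
        also have "\<dots> = D (F s0 x y) (F (s0+1) x (y-1))"
          unfolding D_def pdet_def pmat_def
          by (rule det_mat_cong, auto simp: cdef less_Suc_eq ix)
        finally show ?thesis .
      qed
      have T6: "cdet N F (n+1) (x+1) (y-1) = D (F s0 (x+1) y) (F (s0+1) (x+1) (y-1))"
      proof -
        define P1 where "P1 = (\<lambda>j i. if j < M + 1 then F (n + 1 + int j) (x+1) y i else F (n + 1 + int j) (x+1) (y-1) i)"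
        have "cdet N F (n+1) (x+1) (y-1) = det (mat N N (\<lambda>(i,j). P1 j i))"
        proof -
          have "det (mat N N (\<lambda>(i,j). P1 j i)) = det (mat N N (\<lambda>(i,j). (\<lambda>j i. F (n + 1 + int j) (x+1) (y-1) i) j i))"
          proof (rule mix_det[where r="M+1" and \<beta>=\<gamma>])
            show "M+1 < N" by (simp add: NM)
          next
            fix j i assume j: "j < M+1" and i: "i < N"
            show "P1 j i = (\<lambda>j i. F (n + 1 + int j) (x+1) (y-1) i) j i - \<gamma> * (\<lambda>j i. F (n + 1 + int j) (x+1) (y-1) i) (Suc j) i" using j hK[of "n + 1 + int j" i] by (simp add: ac_simps P1_def)
          next
            fix j i assume j: "M+1 \<le> j" "j < N" and i: "i < N"
            show "P1 j i = (\<lambda>j i. F (n + 1 + int j) (x+1) (y-1) i) j i" using j by (simp add: NM P1_def)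
          qed
          thus ?thesis by (simp add: cdet_def)
        qed
        also have "\<dots> = det (mat N N (\<lambda>(i,j). if j < M then F (n + 1 + int j) x y i else P1 j i))"
        proof (rule sym, rule mix_det[where r="M" and \<beta>=\<alpha> and P="\<lambda>j i. if j < M then F (n + 1 + int j) x y i else P1 j i" and Q=P1])
          show "M < N" by (simp add: NM)
        next
          fix j i assume j: "j < M" and i: "i < N"
          show "(if j < M then F (n + 1 + int j) x y i else P1 j i) = P1 j i - \<alpha> * P1 (Suc j) i"
            using j hx[of "n + 1 + int j" x y i] by (simp add: ac_simps P1_def)
        next
          fix j i assume j: "M \<le> j" "j < N" and i: "i < N"
          show "(if j < M then F (n + 1 + int j) x y i else P1 j i) = P1 j i" using j by simp
        qed
        also have "\<dots> = D (F s0 (x+1) y) (F (s0+1) (x+1) (y-1))"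
          unfolding D_def pdet_def pmat_def
          by (rule det_mat_cong, auto simp: cdef P1_def less_Suc_eq ix)
        finally show ?thesis .
      qed
      have L2: "D w (\<lambda>i. s * u i + t * v i) = s * D w u + t * D w v" for w s t u v
        unfolding D_def by (rule pdet_lin2[OF N2])
      have Z: "D u u = 0" for u unfolding D_def by (rule pdet_same[OF N2])
      have S: "D u w = - D w u" for u w unfolding D_def by (rule pdet_swap[OF N2])
      have e4: "D (F s0 x y) (F (s0+1) (x+1) y) = D (F s0 x y) (F s0 (x+1) y) / \<alpha>"
      proof -
        have "F (s0+1) (x+1) y = (\<lambda>i. (1/\<alpha>) * F s0 (x+1) y i + (-1/\<alpha>) * F s0 x y i)"
          using r1 by auto
        note eqf = this
        show ?thesis unfolding eqf L2 Z by simp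
      qed
      have e5: "D (F s0 x y) (F (s0+1) x (y-1)) = D (F s0 x y) (F s0 x (y-1)) / \<gamma>"
      proof -
        have "F (s0+1) x (y-1) = (\<lambda>i. (1/\<gamma>) * F s0 x (y-1) i + (-1/\<gamma>) * F s0 x y i)"
          using r2 by auto
        note eqf = this
        show ?thesis unfolding eqf L2 Z by simp
      qed
      have e6: "D (F s0 (x+1) y) (F (s0+1) (x+1) (y-1)) = - D (F s0 (x+1) y) (F s0 x (y-1)) / (\<alpha> - \<gamma>)"
      proof -
        have "F (s0+1) (x+1) (y-1) = (\<lambda>i. (1/(\<alpha>-\<gamma>)) * F s0 (x+1) y i + (-1/(\<alpha>-\<gamma>)) * F s0 x (y-1) i)"
          using r3 by auto
        note eqf = this
        show ?thesis unfolding eqf L2 Z using S[of "F s0 x (y-1)" "F s0 (x+1) y"] by simp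
      qed
      have pl: "D (F n x y) (F s0 x y) * D (F s0 (x+1) y) (F s0 x (y-1))
             - D (F n x y) (F s0 (x+1) y) * D (F s0 x y) (F s0 x (y-1))
             + D (F n x y) (F s0 x (y-1)) * D (F s0 x y) (F s0 (x+1) y) = 0"
        unfolding D_def by (rule pluecker[OF N2])
      have sg: "((-1::complex)^M) * ((-1::complex)^M) = 1" by (simp add: power_mult[symmetric] power_mult_distrib power2_eq_square[symmetric])
      have f4: "\<alpha> * cdet N F (n+1) (x+1) y = D (F s0 x y) (F s0 (x+1) y)" unfolding T4 e4 using al by simp
      have f5: "\<gamma> * cdet N F (n+1) x (y-1) = D (F s0 x y) (F s0 x (y-1))" unfolding T5 e5 using ga by simp
      have f6: "(\<alpha> - \<gamma>) * cdet N F (n+1) (x+1) (y-1) = - D (F s0 (x+1) y) (F s0 x (y-1))" unfolding T6 e6 using nz by simp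
      show ?thesis unfolding T1 T2 T3 by (rule alg2[OF f5 f4 f6 pl])
    qed
    show ?thesis by (rule alg3[OF ga key])
  qed
qed


definition ex :: "complex \<Rightarrow> complex \<Rightarrow> complex \<Rightarrow> complex \<Rightarrow> int \<Rightarrow> int \<Rightarrow> int \<Rightarrow> int \<Rightarrow> complex" where
  "ex a b c p s k l m = p powi s * (1 - a*p) powi (-k) * (1 - b/p) powi (-l) * (1 - c*p) powi m"

lemma phi_ex: "phi a b c p q cc d i n k l m = cc i * ex a b c (p i) n k l m + d i * ex a b c (q i) n k l m"
  by (simp add: phi_def ex_def mult.assoc)

lemma powi_shift: "(u::complex) \<noteq> 0 \<Longrightarrow> u powi e = u powi (e - 1) * u"
  using power_int_add_1[of u "e - 1"] by simp

lemma ex_k: assumes "p \<noteq> 0" "1 - a*p \<noteq> 0"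
  shows "ex a b c p s k l m = ex a b c p s (k+1) l m - a * ex a b c p (s+1) (k+1) l m"
proof -
  have 1: "(1-a*p) powi (-k) = (1-a*p) powi (-(k+1)) * (1 - a*p)"
    using powi_shift[OF assms(2), of "-k"] by simp
  have 2: "p powi (s+1) = p powi s * p" using powi_shift[OF assms(1), of "s+1"] by simp
  show ?thesis unfolding ex_def 1 2 by (simp add: algebra_simps)
qed

lemma ex_m: assumes "p \<noteq> 0" "1 - c*p \<noteq> 0"
  shows "ex a b c p s k l m = ex a b c p s k l (m-1) - c * ex a b c p (s+1) k l (m-1)"
proof -
  have 1: "(1-c*p) powi m = (1-c*p) powi (m-1) * (1 - c*p)"
    using powi_shift[OF assms(2), of "m"] by simp
  have 2: "p powi (s+1) = p powi s * p" using powi_shift[OF assms(1), of "s+1"] by simp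
  show ?thesis unfolding ex_def 1 2 by (simp add: algebra_simps)
qed

lemma ex_l: assumes "p \<noteq> 0" "1 - b/p \<noteq> 0"
  shows "ex a b c p s k l m = ex a b c p s k (l+1) m - b * ex a b c p (s-1) k (l+1) m"
proof -
  have 1: "(1-b/p) powi (-l) = (1-b/p) powi (-(l+1)) * (1 - b/p)"
    using powi_shift[OF assms(2), of "-l"] by simp
  have 2: "p powi s = p powi (s-1) * p" using powi_shift[OF assms(1), of "s"] by simp
  have 3: "p powi (s-1) * p * (1 - b/p) = p powi s - b * p powi (s-1)"
    unfolding 2 using assms(1) by (simp add: algebra_simps)
  have "ex a b c p s k l m = (p powi (s-1) * p * (1 - b/p)) * (1 - a*p) powi (-k) * (1 - b/p) powi (-(l+1)) * (1 - c*p) powi m"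
    unfolding ex_def 1 2 by (simp add: algebra_simps)
  also have "\<dots> = ex a b c p s k (l+1) m - b * ex a b c p (s-1) k (l+1) m"
    unfolding 3 ex_def by (simp add: algebra_simps)
  finally show ?thesis .
qed

lemma alg4:
  fixes K1 K2 A B C D E F b c :: complex
  assumes K1: "K1 \<noteq> 0" and K2: "K2 \<noteq> 0" and b: "b \<noteq> 0" and c: "c \<noteq> 0"
    and h: "K1 * A * (K2 * B) - 1 / b / c * (K2 * C) * (K1 * D) = (1 - 1 / b / c) * (K1 * E) * (K2 * F)"
  shows "C * D - b * c * A * B = (1 - b * c) * E * F"
proof -
  have "(K1 * K2) * (A * B - 1 / b / c * C * D) = (K1 * K2) * ((1 - 1 / b / c) * E * F)"
    using h by (simp add: algebra_simps)
  hence h2: "A * B - 1 / b / c * C * D = (1 - 1 / b / c) * E * F" using K1 K2 by simp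
  have "C * D - b * c * A * B = - (b * c) * (A * B - 1 / b / c * C * D)" using b c by (simp add: algebra_simps)
  also have "\<dots> = - (b * c) * ((1 - 1 / b / c) * E * F)" unfolding h2 ..
  also have "\<dots> = (1 - b * c) * E * F" using b c by (simp add: algebra_simps)
  finally show ?thesis .
qed

locale cas_setup =
  fixes a b c :: complex and N :: nat and p q cc d :: "nat \<Rightarrow> complex"
  assumes a: "a \<noteq> 0" and b: "b \<noteq> 0" and c: "c \<noteq> 0" and N: "1 \<le> N"
    and pq: "\<And>i. i < N \<Longrightarrow> p i \<noteq> 0 \<and> q i \<noteq> 0"
    and nz: "\<And>i. i < N \<Longrightarrow> 1 - a * p i \<noteq> 0 \<and> 1 - b / p i \<noteq> 0 \<and> 1 - c * p i \<noteq> 0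
             \<and> 1 - a * q i \<noteq> 0 \<and> 1 - b / q i \<noteq> 0 \<and> 1 - c * q i \<noteq> 0"
begin

abbreviation "ph i n k l m \<equiv> phi a b c p q cc d i n k l m"
abbreviation "tau n k l m \<equiv> tau_cas a b c N p q cc d n k l m"

lemma ph_k: "i < N \<Longrightarrow> ph i s k l m = ph i s (k+1) l m - a * ph i (s+1) (k+1) l m"
proof -
  assume i: "i < N"
  note e1 = ex_k[of "p i" a b c s k l m] and e2 = ex_k[of "q i" a b c s k l m]
  have n1: "1 - a * p i \<noteq> 0" and n2: "1 - a * q i \<noteq> 0" using nz[OF i] by auto
  show ?thesis unfolding phi_ex e1[OF conjunct1[OF pq[OF i]] n1] e2[OF conjunct2[OF pq[OF i]] n2]
    by (simp add: algebra_simps)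
qed

lemma ph_m: "i < N \<Longrightarrow> ph i s k l m = ph i s k l (m-1) - c * ph i (s+1) k l (m-1)"
proof -
  assume i: "i < N"
  note e1 = ex_m[of "p i" c a b s k l m] and e2 = ex_m[of "q i" c a b s k l m]
  have n1: "1 - c * p i \<noteq> 0" and n2: "1 - c * q i \<noteq> 0" using nz[OF i] by auto
  show ?thesis unfolding phi_ex e1[OF conjunct1[OF pq[OF i]] n1] e2[OF conjunct2[OF pq[OF i]] n2]
    by (simp add: algebra_simps)
qed

lemma ph_l: "i < N \<Longrightarrow> ph i s k l m = ph i s k (l+1) m - b * ph i (s-1) k (l+1) m"
proof -
  assume i: "i < N"
  note e1 = ex_l[of "p i" b a c s k l m] and e2 = ex_l[of "q i" b a c s k l m]
  have n1: "1 - b / p i \<noteq> 0" and n2: "1 - b / q i \<noteq> 0" using nz[OF i] by auto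
  show ?thesis unfolding phi_ex e1[OF conjunct1[OF pq[OF i]] n1] e2[OF conjunct2[OF pq[OF i]] n2]
    by (simp add: algebra_simps)
qed

lemma eq2: "tau (n+1) k l (m-1) * tau n (k+1) l m - a / c * tau (n+1) (k+1) l m * tau n k l (m-1)
       = (1 - a / c) * tau n k l m * tau (n+1) (k+1) l (m-1)"
proof -
  define F where "F = (\<lambda>s x y i. if i < N then ph i s x l y else 0)"
  have hx: "F s x y i = F s (x+1) y i - a * F (s+1) (x+1) y i" for s x y i
    unfolding F_def using ph_k[of i s x l y] by auto
  have hy: "F s x y i = F s x (y-1) i - c * F (s+1) x (y-1) i" for s x y i
    unfolding F_def using ph_m[of i s x l y] by auto
  have t: "tau s x l y = cdet N F s x y" for s x y
    unfolding tau_cas_def cdet_def F_def by (rule det_mat_cong, auto)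
  show ?thesis unfolding t by (rule cas_generic[where F=F and N=N and \<alpha>=a and \<gamma>=c, OF N a c hx hy])
qed

lemma eq1: "tau n k (l+1) m * tau n k l (m-1) - b * c * tau (n+1) k l (m-1) * tau (n-1) k (l+1) m
       = (1 - b * c) * tau n k l m * tau n k (l+1) (m-1)"
proof -
  define F where "F = (\<lambda>s x y i. if i < N then (-b) powi x * ph i (s - x) k x y else 0)"
  have hx: "F s x y i = F s (x+1) y i - (1/b) * F (s+1) (x+1) y i" for s x y i
  proof (cases "i < N")
    case True
    have e: "(-b) powi (x+1) = (-b) powi x * (-b)" using powi_shift[of "-b" "x+1"] b by simp
    have r: "ph i (s - x) k x y = ph i (s - x) k (x+1) y - b * ph i (s - x - 1) k (x+1) y"
      using ph_l[OF True, of "s - x" k x y] by simp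
    show ?thesis unfolding F_def using True b unfolding e r
      by (simp add: algebra_simps)
  qed (simp add: F_def)
  have hy: "F s x y i = F s x (y-1) i - c * F (s+1) x (y-1) i" for s x y i
  proof (cases "i < N")
    case True
    have r: "ph i (s - x) k x y = ph i (s - x) k x (y-1) - c * ph i (s - x + 1) k x (y-1)"
      using ph_m[OF True, of "s - x" k x y] by simp
    show ?thesis unfolding F_def using True unfolding r
      by (simp add: algebra_simps)
  qed (simp add: F_def)
  have t: "cdet N F s x y = ((-b) powi x) ^ N * tau (s - x) k x y" for s x y
  proof -
    have "mat N N (\<lambda>(i,j). F (s + int j) x y i) = (-b) powi x \<cdot>\<^sub>m mat N N (\<lambda>(i,j). ph i (s - x + int j) k x y)"
      by (rule eq_matI, auto simp: F_def algebra_simps)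
    thus ?thesis unfolding cdet_def tau_cas_def by simp
  qed
  have bnz: "1 / b \<noteq> 0" using b by simp
  note gen = cas_generic[where F=F and N=N and \<alpha>="1/b" and \<gamma>=c and n="n+l" and x=l and y=m, OF N bnz c hx hy]
  have e: "(-b) powi (l+1) = (-b) powi l * (-b)" using powi_shift[of "-b" "l+1"] b by simp
  have K1: "((-b) powi l) ^ N \<noteq> 0" and K2: "((-b) powi l * (-b)) ^ N \<noteq> 0" using b by auto
  from gen show ?thesis unfolding t e by (intro alg4[OF K1 K2 b c], simp add: algebra_simps)
qed

lemma bil: "bilinear_eqs a b c (tau_cas a b c N p q cc d)"
  unfolding bilinear_eqs_def using eq1 eq2 by blast

end


definition vecE :: "nat \<Rightarrow> (nat \<Rightarrow> complex) \<Rightarrow> complex \<Rightarrow> complex \<Rightarrow> nat \<Rightarrow> complex" where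
  "vecE N u s t = (\<lambda>i. if i < N then u i else if i = N then s else t)"

lemma bordered:
  fixes M :: "nat \<Rightarrow> nat \<Rightarrow> complex" and u1 u2 z1 z2 :: "nat \<Rightarrow> complex"
  shows "pdet (N+2) (\<lambda>i j. if i < N then M i j else if i = N then - z1 j else - z2 j) (vecE N u1 1 0) (vecE N u2 0 1)
   = det (mat N N (\<lambda>(i,j). M i j + u1 i * z1 j + u2 i * z2 j))"
proof -
  define A where "A = mat N N (\<lambda>(i,j). M i j)"
  define U where "U = mat N 2 (\<lambda>(i,j). if j = 0 then u1 i else u2 i)"
  define V where "V = mat 2 N (\<lambda>(i,j). if i = 0 then - z1 j else - z2 j)"
  define X where "X = mat N N (\<lambda>(i,j). M i j + u1 i * z1 j + u2 i * z2 j)"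
  have cA: "A \<in> carrier_mat N N" and cU: "U \<in> carrier_mat N 2" and cV: "V \<in> carrier_mat 2 N"
    and cX: "X \<in> carrier_mat N N" by (auto simp: A_def U_def V_def X_def)
  have UV: "(U * V) $$ (i,j) = - u1 i * z1 j - u2 i * z2 j" if "i < N" "j < N" for i j
    using that cU cV by (simp add: scalar_prod_def U_def V_def numeral_2_eq_2 atLeast0_lessThan_Suc)
  have Zeq: "pmat (N+2) (\<lambda>i j. if i < N then M i j else if i = N then - z1 j else - z2 j) (vecE N u1 1 0) (vecE N u2 0 1)
      = four_block_mat A U V (1\<^sub>m 2)"
  proof (rule eq_matI)
    fix i j assume i: "i < dim_row (four_block_mat A U V (1\<^sub>m 2))" and j: "j < dim_col (four_block_mat A U V (1\<^sub>m 2))"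
    hence i2: "i < N + 2" and j2: "j < N + 2" using cA by auto
    show "pmat (N+2) (\<lambda>i j. if i < N then M i j else if i = N then - z1 j else - z2 j) (vecE N u1 1 0) (vecE N u2 0 1) $$ (i,j)
      = four_block_mat A U V (1\<^sub>m 2) $$ (i,j)"
      using i2 j2 cA cU cV by (auto simp: pmat_def vecE_def A_def U_def V_def less_Suc_eq)
  qed (insert cA, auto simp: pmat_def)
  have b1: "X * 1\<^sub>m N + U * V = A"
    by (rule eq_matI, insert cX cU cV UV, auto simp: A_def X_def)
  have prod: "four_block_mat A U V (1\<^sub>m 2) = four_block_mat X U (0\<^sub>m 2 N) (1\<^sub>m 2) * four_block_mat (1\<^sub>m N) (0\<^sub>m N 2) V (1\<^sub>m 2)"
    by (subst mult_four_block_mat[OF cX cU zero_carrier_mat one_carrier_mat one_carrier_mat zero_carrier_mat cV one_carrier_mat],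
        insert cX cU cV b1, simp)
  have d1: "det (four_block_mat X U (0\<^sub>m 2 N) (1\<^sub>m 2)) = det X"
    by (subst det_four_block_mat_lower_left_zero[OF cX cU refl one_carrier_mat], simp)
  have d2: "det (four_block_mat (1\<^sub>m N) (0\<^sub>m N 2) V (1\<^sub>m 2)) = 1"
    by (subst det_four_block_mat_upper_right_zero[OF one_carrier_mat refl cV one_carrier_mat], simp)
  have "det (four_block_mat A U V (1\<^sub>m 2)) = det X"
    unfolding prod by (subst det_mult[where n="N+2"], insert cX cU cV, auto simp: d1 d2)
  thus ?thesis unfolding pdet_def Zeq X_def .
qed


lemma alg5:
  fixes T1 T2 T3 T4 T5 T6 D12 D13 D14 D23 D24 D34 \<alpha> \<gamma> :: complex
  assumes a: "\<alpha> \<noteq> 0" and g: "\<gamma> \<noteq> 0" and dg: "\<alpha> - \<gamma> \<noteq> 0"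
    and t1: "T1 = D34" and t2: "T2 = D14 + D34" and t3: "T3 = D24 + D34"
    and t4: "\<alpha> * T4 = D13 + \<alpha> * D34" and t5: "\<gamma> * T5 = D23 + \<gamma> * D34"
    and t6: "(\<alpha> - \<gamma>) * T6 = (\<alpha> - \<gamma>) * D34 + D12 + D13 - \<gamma> * D14 - D23 + \<alpha> * D24"
    and pl: "D12 * D34 - D13 * D24 + D14 * D23 = 0"
  shows "T5 * T2 - \<alpha> / \<gamma> * T4 * T3 = (1 - \<alpha> / \<gamma>) * T1 * T6"
proof -
  have "\<gamma> * T5 * T2 - \<alpha> * T4 * T3 = (\<gamma> - \<alpha>) * T1 * T6"
  proof -
    have r: "(\<gamma> - \<alpha>) * T1 * T6 = - (T1 * ((\<alpha> - \<gamma>) * T6))" by (simp add: algebra_simps)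
    have "(D23 + \<gamma> * D34) * (D14 + D34) - (D13 + \<alpha> * D34) * (D24 + D34)
        = - (D34 * ((\<alpha> - \<gamma>) * D34 + D12 + D13 - \<gamma> * D14 - D23 + \<alpha> * D24))
          + (D12 * D34 - D13 * D24 + D14 * D23)"
      by (simp add: algebra_simps)
    hence e: "(D23 + \<gamma> * D34) * (D14 + D34) - (D13 + \<alpha> * D34) * (D24 + D34)
        = - (D34 * ((\<alpha> - \<gamma>) * D34 + D12 + D13 - \<gamma> * D14 - D23 + \<alpha> * D24))"
      unfolding pl by simp
    show ?thesis unfolding r
      unfolding t1 t2 t3 t4 t5 t6 by (rule e)
  qed
  thus ?thesis by (rule alg3[OF g])
qed

lemma acs:
  fixes a b c d u :: complex
  shows "a * (b * u) * c * d = a * b * c * d * u" "a * b * (c / u) * d = a * b * c * d / u"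
    "a * b * c * (d / u) = a * b * c * d / u" "a * (b / u) * c * d = a * b * c * d / u"
    "a * b * (c * u) * d = a * b * c * d * u" "a * b * c * (d * u) = a * b * c * d * u"
  by (simp_all add: mult_ac)

locale gram =
  fixes N :: nat and p q w z :: "nat \<Rightarrow> complex" and C :: "nat \<Rightarrow> nat \<Rightarrow> complex" and \<alpha> \<gamma> :: complex
  assumes N: "1 \<le> N" and a: "\<alpha> \<noteq> 0" and g: "\<gamma> \<noteq> 0"
    and pq: "\<And>i. i < N \<Longrightarrow> p i \<noteq> 0 \<and> q i \<noteq> 0"
    and ppq: "\<And>i j. i < N \<Longrightarrow> j < N \<Longrightarrow> p i + q j \<noteq> 0"
    and nz: "\<And>i. i < N \<Longrightarrow> 1 - \<alpha> * p i \<noteq> 0 \<and> 1 + \<alpha> * q i \<noteq> 0 \<and> 1 - \<gamma> * p i \<noteq> 0 \<and> 1 + \<gamma> * q i \<noteq> 0"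
begin

definition "W s x y i = w i * (- p i) powi s * (1 - \<alpha> * p i) powi (-x) * (1 - \<gamma> * p i) powi y"
definition "Z s x y j = z j * q j powi (-s) * (1 + \<alpha> * q j) powi x * (1 + \<gamma> * q j) powi (-y)"
definition "G s x y = det (mat N N (\<lambda>(i,j). C i j + W s x y i * Z s x y j / (p i + q j)))"

lemma powi_up: "(u::complex) \<noteq> 0 \<Longrightarrow> u powi (e + 1) = u powi e * u"
  by (rule power_int_add_1, simp)
lemma powi_down: "(u::complex) \<noteq> 0 \<Longrightarrow> u powi (e - 1) = u powi e / u"
  using powi_shift[of u e] by simp
lemma powi_mdown: "(u::complex) \<noteq> 0 \<Longrightarrow> u powi (- (e + 1)) = u powi (- e) / u"
  using powi_down[of u "-e"] by simp
lemma powi_mup: "(u::complex) \<noteq> 0 \<Longrightarrow> u powi (- (e - 1)) = u powi (- e) * u"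
  using powi_up[of u "-e"] by simp

lemma W_s: assumes "i < N" shows "W (s+1) x y i = W s x y i * (- p i)"
proof -
  have h: "- p i \<noteq> 0" using pq[OF assms] by simp
  show ?thesis unfolding W_def powi_up[OF h] by (rule acs(1))
qed
lemma W_x: assumes "i < N" shows "W s (x+1) y i = W s x y i / (1 - \<alpha> * p i)"
proof -
  have h: "1 - \<alpha> * p i \<noteq> 0" using nz[OF assms] by simp
  show ?thesis unfolding W_def powi_mdown[OF h] by (rule acs(2))
qed
lemma W_y: assumes "i < N" shows "W s x (y-1) i = W s x y i / (1 - \<gamma> * p i)"
proof -
  have h: "1 - \<gamma> * p i \<noteq> 0" using nz[OF assms] by simp
  show ?thesis unfolding W_def powi_down[OF h] by (rule acs(3))
qed
lemma Z_s: assumes "j < N" shows "Z (s+1) x y j = Z s x y j / q j"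
proof -
  have h: "q j \<noteq> 0" using pq[OF assms] by simp
  show ?thesis unfolding Z_def powi_mdown[OF h] by (rule acs(4))
qed
lemma Z_x: assumes "j < N" shows "Z s (x+1) y j = Z s x y j * (1 + \<alpha> * q j)"
proof -
  have h: "1 + \<alpha> * q j \<noteq> 0" using nz[OF assms] by simp
  show ?thesis unfolding Z_def powi_up[OF h] by (rule acs(5))
qed
lemma Z_y: assumes "j < N" shows "Z s x (y-1) j = Z s x y j * (1 + \<gamma> * q j)"
proof -
  have h: "1 + \<gamma> * q j \<noteq> 0" using nz[OF assms] by simp
  show ?thesis unfolding Z_def powi_mup[OF h] by (rule acs(6))
qed

end


lemma E2:
  fixes c W Z p q \<alpha> Zp :: complex
  assumes "1 - \<alpha> * p \<noteq> 0" "p + q \<noteq> 0"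
  shows "c + W / (1 - \<alpha> * p) * (Z * (1 + \<alpha> * q)) / (p + q) = c + W * Z / (p + q) + \<alpha> * W / (1 - \<alpha> * p) * Z + 0 * Zp"
proof -
  define u where "u = 1 - \<alpha> * p"
  define s where "s = p + q"
  have v: "1 + \<alpha> * q = u + \<alpha> * s" by (simp add: u_def s_def algebra_simps)
  have n: "u \<noteq> 0" "s \<noteq> 0" using assms by (auto simp: u_def s_def)
  show ?thesis unfolding v unfolding u_def[symmetric] s_def[symmetric] using n
    by (simp add: field_simps)
qed

lemma E4:
  fixes c W Z p q \<alpha> :: complex
  assumes "1 - \<alpha> * p \<noteq> 0" "p + q \<noteq> 0" "q \<noteq> 0" "\<alpha> \<noteq> 0"
  shows "c + W * (- p) / (1 - \<alpha> * p) * (Z * (1 + \<alpha> * q) / q) / (p + q) = c + W * Z / (p + q) + 0 * Z + - (\<alpha> * W / (1 - \<alpha> * p)) / \<alpha> * (Z / q)"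
proof -
  define u where "u = 1 - \<alpha> * p"
  define s where "s = p + q"
  define v where "v = 1 + \<alpha> * q"
  have r: "- p * v = u * q - s" by (simp add: u_def s_def v_def algebra_simps)
  have n: "u \<noteq> 0" "s \<noteq> 0" using assms by (auto simp: u_def s_def)
  have "c + W * (- p) / u * (Z * v / q) / s = c + W * Z * (- p * v) / (u * q * s)"
    using n assms by (simp add: field_simps)
  also have "\<dots> = c + W * Z * (u * q - s) / (u * q * s)" unfolding r ..
  also have "\<dots> = c + W * Z / s + 0 * Z + - (\<alpha> * W / u) / \<alpha> * (Z / q)"
    using n assms by (simp add: field_simps)
  finally have main: "c + W * (- p) / u * (Z * v / q) / s = c + W * Z / s + 0 * Z + - (\<alpha> * W / u) / \<alpha> * (Z / q)" .
  from main show ?thesis unfolding u_def s_def v_def .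
qed

lemma E6:
  fixes c W Z p q \<alpha> \<gamma> :: complex
  assumes "1 - \<alpha> * p \<noteq> 0" "1 - \<gamma> * p \<noteq> 0" "p + q \<noteq> 0" "q \<noteq> 0"
  shows "c + W * (- p) / ((1 - \<alpha> * p) * (1 - \<gamma> * p)) * (Z * ((1 + \<alpha> * q) * (1 + \<gamma> * q)) / q) / (p + q)
       = c + W * Z / (p + q) + - (\<alpha> * \<gamma> * (p * (W / ((1 - \<alpha> * p) * (1 - \<gamma> * p))))) * Z
         + - (W / ((1 - \<alpha> * p) * (1 - \<gamma> * p))) * (Z / q)"
proof -
  define u where "u = (1 - \<alpha> * p) * (1 - \<gamma> * p)"
  define s where "s = p + q"
  define v where "v = (1 + \<alpha> * q) * (1 + \<gamma> * q)"
  have r: "- p * v = - \<alpha> * \<gamma> * p * q * s - s + u * q" by (simp add: u_def s_def v_def algebra_simps)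
  have n: "u \<noteq> 0" "s \<noteq> 0" using assms by (auto simp: u_def s_def)
  have "c + W * (- p) / u * (Z * v / q) / s = c + W * Z * (- p * v) / (u * q * s)"
    using n assms by (simp add: field_simps)
  also have "\<dots> = c + W * Z * (- \<alpha> * \<gamma> * p * q * s - s + u * q) / (u * q * s)" unfolding r ..
  also have "\<dots> = c + W * Z / s + - (\<alpha> * \<gamma> * (p * (W / u))) * Z + - (W / u) * (Z / q)"
    using n assms by (simp add: field_simps)
  finally have main: "c + W * (- p) / u * (Z * v / q) / s = c + W * Z / s + - (\<alpha> * \<gamma> * (p * (W / u))) * Z + - (W / u) * (Z / q)" .
  from main show ?thesis unfolding u_def s_def v_def .
qed

lemma V6a:
  fixes W p \<alpha> \<gamma> :: complex
  assumes "1 - \<alpha> * p \<noteq> 0" "1 - \<gamma> * p \<noteq> 0" "\<alpha> - \<gamma> \<noteq> 0"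
  shows "- (\<alpha> * \<gamma> * (p * (W / ((1 - \<alpha> * p) * (1 - \<gamma> * p)))))
     = - \<gamma> / (\<alpha> - \<gamma>) * (\<alpha> * W / (1 - \<alpha> * p)) + \<alpha> / (\<alpha> - \<gamma>) * (\<gamma> * W / (1 - \<gamma> * p))"
proof -
  define u1 where "u1 = 1 - \<alpha> * p"
  define u2 where "u2 = 1 - \<gamma> * p"
  define d where "d = \<alpha> - \<gamma>"
  have r: "u1 - u2 = - d * p" by (simp add: u1_def u2_def d_def algebra_simps)
  have n: "u1 \<noteq> 0" "u2 \<noteq> 0" "d \<noteq> 0" using assms by (auto simp: u1_def u2_def d_def)
  have "- \<gamma> / d * (\<alpha> * W / u1) + \<alpha> / d * (\<gamma> * W / u2) = \<alpha> * \<gamma> * W * (u1 - u2) / (d * u1 * u2)"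
    using n by (simp add: field_simps)
  also have "\<dots> = \<alpha> * \<gamma> * W * (- d * p) / (d * u1 * u2)" unfolding r ..
  also have "\<dots> = - (\<alpha> * \<gamma> * (p * (W / (u1 * u2))))" using n by (simp add: field_simps)
  finally have main: "- (\<alpha> * \<gamma> * (p * (W / (u1 * u2)))) = - \<gamma> / d * (\<alpha> * W / u1) + \<alpha> / d * (\<gamma> * W / u2)" by simp
  from main show ?thesis unfolding u1_def u2_def d_def .
qed

lemma V6b:
  fixes W p \<alpha> \<gamma> :: complex
  assumes "1 - \<alpha> * p \<noteq> 0" "1 - \<gamma> * p \<noteq> 0" "\<alpha> - \<gamma> \<noteq> 0"
  shows "- (W / ((1 - \<alpha> * p) * (1 - \<gamma> * p)))
     = -1 / (\<alpha> - \<gamma>) * (\<alpha> * W / (1 - \<alpha> * p)) + 1 / (\<alpha> - \<gamma>) * (\<gamma> * W / (1 - \<gamma> * p))"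
proof -
  define u1 where "u1 = 1 - \<alpha> * p"
  define u2 where "u2 = 1 - \<gamma> * p"
  define d where "d = \<alpha> - \<gamma>"
  have r: "\<gamma> * u1 - \<alpha> * u2 = - d" by (simp add: u1_def u2_def d_def algebra_simps)
  have n: "u1 \<noteq> 0" "u2 \<noteq> 0" "d \<noteq> 0" using assms by (auto simp: u1_def u2_def d_def)
  have "-1 / d * (\<alpha> * W / u1) + 1 / d * (\<gamma> * W / u2) = W * (\<gamma> * u1 - \<alpha> * u2) / (d * u1 * u2)"
    using n by (simp add: field_simps)
  also have "\<dots> = W * (- d) / (d * u1 * u2)" unfolding r ..
  also have "\<dots> = - (W / (u1 * u2))" using n by (simp add: field_simps)
  finally have main: "- (W / (u1 * u2)) = -1 / d * (\<alpha> * W / u1) + 1 / d * (\<gamma> * W / u2)" by simp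
  from main show ?thesis unfolding u1_def u2_def d_def .
qed

lemma C6:
  fixes d \<alpha> \<gamma> D12 D13 D14 D23 D24 D34 :: complex
  assumes d: "d \<noteq> 0" and al: "\<alpha> = d + \<gamma>"
  shows "d * ((- \<gamma> / d * (1 / d) - \<alpha> / d * (- 1 / d)) * D12 + (- \<gamma> / d * 0 - 1 * (- 1 / d)) * D13 +
            (- \<gamma> / d * 1 - 0 * (- 1 / d)) * D14 + (\<alpha> / d * 0 - 1 * (1 / d)) * D23 +
            (\<alpha> / d * 1 - 0 * (1 / d)) * D24 + (1 * 1 - 0 * 0) * D34)
       = d * D34 + D12 + D13 - \<gamma> * D14 - D23 + \<alpha> * D24"
  unfolding al using d by (simp add: field_simps)

context gram begin

lemma main: "G (n+1) x (y-1) * G n (x+1) y - \<alpha> / \<gamma> * G (n+1) (x+1) y * G n x (y-1)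
   = (1 - \<alpha> / \<gamma>) * G n x y * G (n+1) (x+1) (y-1)"
proof (cases "\<alpha> = \<gamma>")
  case True
  have 1: "G s (x+1) y = G s x (y-1)" for s
    unfolding G_def by (rule det_mat_cong, simp add: W_x W_y Z_x Z_y, simp add: True)
  have 2: "G (s+1) (x+1) y = G (s+1) x (y-1)" for s by (rule 1)
  show ?thesis unfolding 1 2 using True g by simp
next
  case False
  have dg: "\<alpha> - \<gamma> \<noteq> 0" using False by simp
  define W0 where "W0 = W n x y"
  define Z0 where "Z0 = Z n x y"
  define M where "M = (\<lambda>i j. C i j + W0 i * Z0 j / (p i + q j))"
  define A where "A = (\<lambda>i. \<alpha> * W0 i / (1 - \<alpha> * p i))"
  define Gv where "Gv = (\<lambda>i. \<gamma> * W0 i / (1 - \<gamma> * p i))"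
  define Zp where "Zp = (\<lambda>j. Z0 j / q j)"
  define H where "H = (\<lambda>i. W0 i / ((1 - \<alpha> * p i) * (1 - \<gamma> * p i)))"
  define P where "P = (\<lambda>i. p i * H i)"
  define cM where "cM = (\<lambda>i j. if i < N then M i j else if i = N then - Z0 j else - Zp j)"
  define D where "D = pdet (N+2) cM"
  define a0 where "a0 = vecE N A 0 0"
  define g0 where "g0 = vecE N Gv 0 0"
  define e1 where "e1 = vecE N (\<lambda>_. 0) 1 0"
  define e2 where "e2 = vecE N (\<lambda>_. 0) 0 1"
  have d2: "2 \<le> N + 2" by simp
  have bord: "D (vecE N u1 1 0) (vecE N u2 0 1) = det (mat N N (\<lambda>(i,j). M i j + u1 i * Z0 j + u2 i * Zp j))" for u1 u2
    unfolding D_def cM_def by (rule bordered)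
  note facts = pq ppq nz
  have T1: "G n x y = D e1 e2"
    unfolding e1_def e2_def bord G_def
    by (rule det_mat_cong, simp add: M_def W0_def Z0_def)
  have T2: "G n (x+1) y = D (vecE N A 1 0) e2"
    unfolding e2_def bord G_def
  proof (rule det_mat_cong)
    fix i j assume i: "i < N" and j: "j < N"
    have h: "1 - \<alpha> * p i \<noteq> 0" "p i + q j \<noteq> 0" using nz[OF i] ppq[OF i j] by auto
    show "(\<lambda>(i, j). C i j + W n (x + 1) y i * Z n (x + 1) y j / (p i + q j)) (i, j) =
          (\<lambda>(i, j). M i j + A i * Z0 j + 0 * Zp j) (i, j)"
    proof -
      have w: "W n (x+1) y i = W0 i / (1 - \<alpha> * p i)" unfolding W0_def by (rule W_x[OF i])
      have zz: "Z n (x+1) y j = Z0 j * (1 + \<alpha> * q j)" unfolding Z0_def by (rule Z_x[OF j])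
      have "C i j + W n (x+1) y i * Z n (x+1) y j / (p i + q j) = M i j + A i * Z0 j + 0 * Zp j"
        unfolding w zz M_def A_def by (rule E2[OF h])
      thus ?thesis by simp
    qed
  qed
  have T3: "G n x (y-1) = D (vecE N Gv 1 0) e2"
    unfolding e2_def bord G_def
  proof (rule det_mat_cong)
    fix i j assume i: "i < N" and j: "j < N"
    have h: "1 - \<gamma> * p i \<noteq> 0" "p i + q j \<noteq> 0" using nz[OF i] ppq[OF i j] by auto
    show "(\<lambda>(i, j). C i j + W n x (y-1) i * Z n x (y-1) j / (p i + q j)) (i, j) =
          (\<lambda>(i, j). M i j + Gv i * Z0 j + 0 * Zp j) (i, j)"
    proof -
      have w: "W n x (y-1) i = W0 i / (1 - \<gamma> * p i)" unfolding W0_def by (rule W_y[OF i])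
      have zz: "Z n x (y-1) j = Z0 j * (1 + \<gamma> * q j)" unfolding Z0_def by (rule Z_y[OF j])
      have "C i j + W n x (y-1) i * Z n x (y-1) j / (p i + q j) = M i j + Gv i * Z0 j + 0 * Zp j"
        unfolding w zz M_def Gv_def by (rule E2[OF h])
      thus ?thesis by simp
    qed
  qed
  have T4: "G (n+1) (x+1) y = D e1 (vecE N (\<lambda>i. - A i / \<alpha>) 0 1)"
    unfolding e1_def bord G_def
  proof (rule det_mat_cong)
    fix i j assume i: "i < N" and j: "j < N"
    have h: "1 - \<alpha> * p i \<noteq> 0" "p i + q j \<noteq> 0" "q j \<noteq> 0" using nz[OF i] ppq[OF i j] pq[OF j] by auto
    show "(\<lambda>(i, j). C i j + W (n+1) (x + 1) y i * Z (n+1) (x + 1) y j / (p i + q j)) (i, j) =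
          (\<lambda>(i, j). M i j + 0 * Z0 j + - A i / \<alpha> * Zp j) (i, j)"
    proof -
      have w: "W (n+1) (x+1) y i = W0 i * (- p i) / (1 - \<alpha> * p i)" by (simp add: W_s[OF i] W_x[OF i] W0_def)
      have zz: "Z (n+1) (x+1) y j = Z0 j * (1 + \<alpha> * q j) / q j" by (simp add: Z_s[OF j] Z_x[OF j] Z0_def)
      have "C i j + W (n+1) (x+1) y i * Z (n+1) (x+1) y j / (p i + q j) = M i j + 0 * Z0 j + - A i / \<alpha> * Zp j"
        unfolding w zz M_def A_def Zp_def by (rule E4[OF h a])
      thus ?thesis by simp
    qed
  qed
  have T5: "G (n+1) x (y-1) = D e1 (vecE N (\<lambda>i. - Gv i / \<gamma>) 0 1)"
    unfolding e1_def bord G_def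
  proof (rule det_mat_cong)
    fix i j assume i: "i < N" and j: "j < N"
    have h: "1 - \<gamma> * p i \<noteq> 0" "p i + q j \<noteq> 0" "q j \<noteq> 0" using nz[OF i] ppq[OF i j] pq[OF j] by auto
    show "(\<lambda>(i, j). C i j + W (n+1) x (y-1) i * Z (n+1) x (y-1) j / (p i + q j)) (i, j) =
          (\<lambda>(i, j). M i j + 0 * Z0 j + - Gv i / \<gamma> * Zp j) (i, j)"
    proof -
      have w: "W (n+1) x (y-1) i = W0 i * (- p i) / (1 - \<gamma> * p i)" by (simp add: W_s[OF i] W_y[OF i] W0_def)
      have zz: "Z (n+1) x (y-1) j = Z0 j * (1 + \<gamma> * q j) / q j" by (simp add: Z_s[OF j] Z_y[OF j] Z0_def)
      have "C i j + W (n+1) x (y-1) i * Z (n+1) x (y-1) j / (p i + q j) = M i j + 0 * Z0 j + - Gv i / \<gamma> * Zp j"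
        unfolding w zz M_def Gv_def Zp_def by (rule E4[OF h g])
      thus ?thesis by simp
    qed
  qed
  have T6: "G (n+1) (x+1) (y-1) = D (vecE N (\<lambda>i. - (\<alpha> * \<gamma> * P i)) 1 0) (vecE N (\<lambda>i. - H i) 0 1)"
    unfolding bord G_def
  proof (rule det_mat_cong)
    fix i j assume i: "i < N" and j: "j < N"
    have h: "1 - \<alpha> * p i \<noteq> 0" "1 - \<gamma> * p i \<noteq> 0" "p i + q j \<noteq> 0" "q j \<noteq> 0"
      using nz[OF i] ppq[OF i j] pq[OF j] by auto
    show "(\<lambda>(i, j). C i j + W (n+1) (x+1) (y-1) i * Z (n+1) (x+1) (y-1) j / (p i + q j)) (i, j) =
          (\<lambda>(i, j). M i j + - (\<alpha> * \<gamma> * P i) * Z0 j + - H i * Zp j) (i, j)"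
    proof -
      have w: "W (n+1) (x+1) (y-1) i = W0 i * (- p i) / ((1 - \<alpha> * p i) * (1 - \<gamma> * p i))"
        by (simp add: W_s[OF i] W_x[OF i] W_y[OF i] W0_def)
      have zz: "Z (n+1) (x+1) (y-1) j = Z0 j * ((1 + \<alpha> * q j) * (1 + \<gamma> * q j)) / q j"
        by (simp add: Z_s[OF j] Z_x[OF j] Z_y[OF j] Z0_def mult.assoc)
      have "C i j + W (n+1) (x+1) (y-1) i * Z (n+1) (x+1) (y-1) j / (p i + q j) = M i j + - (\<alpha> * \<gamma> * P i) * Z0 j + - H i * Zp j"
        unfolding w zz M_def P_def H_def Zp_def by (rule E6[OF h])
      thus ?thesis by simp
    qed
  qed
  have comb: "(\<lambda>i. k1 * a0 i + k2 * g0 i + k3 * e1 i + k4 * e2 i) = vecE N (\<lambda>i. k1 * A i + k2 * Gv i) k3 k4"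
    for k1 k2 k3 k4 by (auto simp: a0_def g0_def e1_def e2_def vecE_def fun_eq_iff)
  have v2: "vecE N A 1 0 = (\<lambda>i. 1 * a0 i + 0 * g0 i + 1 * e1 i + 0 * e2 i)" unfolding comb by simp
  have v3: "vecE N Gv 1 0 = (\<lambda>i. 0 * a0 i + 1 * g0 i + 1 * e1 i + 0 * e2 i)" unfolding comb by simp
  have v4: "vecE N (\<lambda>i. - A i / \<alpha>) 0 1 = (\<lambda>i. (-1/\<alpha>) * a0 i + 0 * g0 i + 0 * e1 i + 1 * e2 i)" unfolding comb by simp
  have v5: "vecE N (\<lambda>i. - Gv i / \<gamma>) 0 1 = (\<lambda>i. 0 * a0 i + (-1/\<gamma>) * g0 i + 0 * e1 i + 1 * e2 i)" unfolding comb by simp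
  have ve1: "e1 = (\<lambda>i. 0 * a0 i + 0 * g0 i + 1 * e1 i + 0 * e2 i)" by simp
  have ve2: "e2 = (\<lambda>i. 0 * a0 i + 0 * g0 i + 0 * e1 i + 1 * e2 i)" by simp
  have vcong: "(\<And>i. i < N \<Longrightarrow> u i = u' i) \<Longrightarrow> vecE N u s t = vecE N u' s t" for u u' s t
    by (auto simp: vecE_def fun_eq_iff)
  have v6a: "vecE N (\<lambda>i. - (\<alpha> * \<gamma> * P i)) 1 0 = (\<lambda>i. (-\<gamma>/(\<alpha>-\<gamma>)) * a0 i + (\<alpha>/(\<alpha>-\<gamma>)) * g0 i + 1 * e1 i + 0 * e2 i)"
    unfolding comb
  proof (rule vcong)
    fix i assume i: "i < N"
    have h: "1 - \<alpha> * p i \<noteq> 0" "1 - \<gamma> * p i \<noteq> 0" using nz[OF i] by auto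
    show "- (\<alpha> * \<gamma> * P i) = - \<gamma> / (\<alpha> - \<gamma>) * A i + \<alpha> / (\<alpha> - \<gamma>) * Gv i"
      unfolding P_def H_def A_def Gv_def by (rule V6a[OF h dg])
  qed
  have v6b: "vecE N (\<lambda>i. - H i) 0 1 = (\<lambda>i. (-1/(\<alpha>-\<gamma>)) * a0 i + (1/(\<alpha>-\<gamma>)) * g0 i + 0 * e1 i + 1 * e2 i)"
    unfolding comb
  proof (rule vcong)
    fix i assume i: "i < N"
    have h: "1 - \<alpha> * p i \<noteq> 0" "1 - \<gamma> * p i \<noteq> 0" using nz[OF i] by auto
    show "- H i = -1 / (\<alpha> - \<gamma>) * A i + 1 / (\<alpha> - \<gamma>) * Gv i"
      unfolding H_def A_def Gv_def by (rule V6b[OF h dg])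
  qed
  note PC = pdet_comb[OF d2, of cM, folded D_def]
  define D12 where "D12 = D a0 g0"
  define D13 where "D13 = D a0 e1"
  define D14 where "D14 = D a0 e2"
  define D23 where "D23 = D g0 e1"
  define D24 where "D24 = D g0 e2"
  define D34 where "D34 = D e1 e2"
  note Ds = D12_def[symmetric] D13_def[symmetric] D14_def[symmetric] D23_def[symmetric] D24_def[symmetric] D34_def[symmetric]
  have t1: "G n x y = D34" unfolding T1 D34_def ..
  have t2: "G n (x+1) y = D14 + D34"
  proof -
    have "G n (x+1) y = D (\<lambda>i. 1 * a0 i + 0 * g0 i + 1 * e1 i + 0 * e2 i) (\<lambda>i. 0 * a0 i + 0 * g0 i + 0 * e1 i + 1 * e2 i)"
      unfolding T2 v2 by simp
    also note PC
    finally show ?thesis by (simp add: Ds)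
  qed
  have t3: "G n x (y-1) = D24 + D34"
  proof -
    have "G n x (y-1) = D (\<lambda>i. 0 * a0 i + 1 * g0 i + 1 * e1 i + 0 * e2 i) (\<lambda>i. 0 * a0 i + 0 * g0 i + 0 * e1 i + 1 * e2 i)"
      unfolding T3 v3 by simp
    also note PC
    finally show ?thesis by (simp add: Ds)
  qed
  have t4: "\<alpha> * G (n+1) (x+1) y = D13 + \<alpha> * D34"
  proof -
    have "G (n+1) (x+1) y = D (\<lambda>i. 0 * a0 i + 0 * g0 i + 1 * e1 i + 0 * e2 i) (\<lambda>i. (-1/\<alpha>) * a0 i + 0 * g0 i + 0 * e1 i + 1 * e2 i)"
      unfolding T4 v4 by simp
    also note PC
    finally show ?thesis using a by (simp add: Ds algebra_simps)
  qed
  have t5: "\<gamma> * G (n+1) x (y-1) = D23 + \<gamma> * D34"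
  proof -
    have "G (n+1) x (y-1) = D (\<lambda>i. 0 * a0 i + 0 * g0 i + 1 * e1 i + 0 * e2 i) (\<lambda>i. 0 * a0 i + (-1/\<gamma>) * g0 i + 0 * e1 i + 1 * e2 i)"
      unfolding T5 v5 by simp
    also note PC
    finally show ?thesis using g by (simp add: Ds algebra_simps)
  qed
  have t6: "(\<alpha> - \<gamma>) * G (n+1) (x+1) (y-1) = (\<alpha> - \<gamma>) * D34 + D12 + D13 - \<gamma> * D14 - D23 + \<alpha> * D24"
  proof -
    have "G (n+1) (x+1) (y-1) = D (\<lambda>i. (-\<gamma>/(\<alpha>-\<gamma>)) * a0 i + (\<alpha>/(\<alpha>-\<gamma>)) * g0 i + 1 * e1 i + 0 * e2 i) (\<lambda>i. (-1/(\<alpha>-\<gamma>)) * a0 i + (1/(\<alpha>-\<gamma>)) * g0 i + 0 * e1 i + 1 * e2 i)"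
      unfolding T6 v6a v6b by simp
    note e = this
    show ?thesis unfolding e PC Ds by (rule C6[OF dg], simp)
  qed
  have pl: "D12 * D34 - D13 * D24 + D14 * D23 = 0"
    unfolding D12_def D13_def D14_def D23_def D24_def D34_def D_def by (rule pluecker[OF d2])
  show ?thesis by (rule alg5[OF a g dg t1 t2 t3 t4 t5 t6 pl])
qed

end


lemma powi_quot: "(v::complex) \<noteq> 0 \<Longrightarrow> (u / v) powi e = u powi e * v powi (- e)"
  unfolding power_int_divide_distrib power_int_minus by (simp add: divide_inverse)

lemma ent2:
  fixes p q a b c :: complex
  assumes "q \<noteq> 0" "1 + a * q \<noteq> 0" "1 + b / q \<noteq> 0" "1 + c * q \<noteq> 0"
  shows "1 / (p + q) * (- p / q) powi n * ((1 - a * p) / (1 + a * q)) powi (- k)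
        * ((1 - b / p) / (1 + b / q)) powi (- l) * ((1 - c * p) / (1 + c * q)) powi m
      = ((1 - b / p) powi (- l) * (- p) powi n * (1 - a * p) powi (- k) * (1 - c * p) powi m)
        * ((1 + b / q) powi l * q powi (- n) * (1 + a * q) powi k * (1 + c * q) powi (- m)) / (p + q)"
  unfolding powi_quot[OF assms(1)] powi_quot[OF assms(2)] powi_quot[OF assms(3)] powi_quot[OF assms(4)]
  by (simp add: ac_simps)

lemma entG:
  fixes p q a \<alpha> c :: complex
  assumes "q \<noteq> 0" "1 + a * q \<noteq> 0" "1 + \<alpha> * q \<noteq> 0" "1 + c * q \<noteq> 0"
  shows "1 / (p + q) * (- p / q) powi n * ((1 - a * p) / (1 + a * q)) powi (- k)
        * ((1 - \<alpha> * p) / (1 + \<alpha> * q)) powi (- x) * ((1 - c * p) / (1 + c * q)) powi m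
      = ((1 - a * p) powi (- k) * (- p) powi n * (1 - \<alpha> * p) powi (- x) * (1 - c * p) powi m)
        * ((1 + a * q) powi k * q powi (- n) * (1 + \<alpha> * q) powi x * (1 + c * q) powi (- m)) / (p + q)"
  unfolding powi_quot[OF assms(1)] powi_quot[OF assms(2)] powi_quot[OF assms(3)] powi_quot[OF assms(4)]
  by (simp add: ac_simps)

lemma ent1:
  fixes p q a b c :: complex
  assumes p: "p \<noteq> 0" and q: "q \<noteq> 0" and b: "b \<noteq> 0" and "1 + a * q \<noteq> 0" and bq: "1 + b / q \<noteq> 0" and "1 + c * q \<noteq> 0"
  shows "1 / (p + q) * (- p / q) powi n * ((1 - a * p) / (1 + a * q)) powi (- k)
        * ((1 - b / p) / (1 + b / q)) powi (- l) * ((1 - c * p) / (1 + c * q)) powi m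
      = ((1 - a * p) powi (- k) * (- p) powi (n + l) * (1 - 1 / b * p) powi (- l) * (1 - c * p) powi m)
        * ((1 + a * q) powi k * q powi (- (n + l)) * (1 + 1 / b * q) powi l * (1 + c * q) powi (- m)) / (p + q)"
proof -
  have bq': "1 + 1 / b * q \<noteq> 0"
  proof
    assume "1 + 1 / b * q = 0"
    hence "b + q = 0" using b by (simp add: field_simps)
    hence "q = - b" by (simp add: add_eq_0_iff)
    thus False using bq b by simp
  qed
  have B: "(1 - b / p) / (1 + b / q) = inverse (- p / q) * ((1 - 1 / b * p) / (1 + 1 / b * q))"
  proof -
    define s where "s = b + q"
    have s: "s \<noteq> 0" using bq q by (auto simp: s_def field_simps)
    have e1: "1 + b / q = s / q" "1 + 1 / b * q = s / b" "1 - b / p = (p - b) / p" "1 - 1 / b * p = (b - p) / b"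
      using p q b by (auto simp: s_def field_simps)
    show ?thesis unfolding e1 using p q b s by (simp add: field_simps)
  qed
  have Bp: "((1 - b / p) / (1 + b / q)) powi (- l) = (- p / q) powi l * ((1 - 1 / b * p) / (1 + 1 / b * q)) powi (- l)"
    unfolding B power_int_mult_distrib power_int_inverse power_int_minus by simp
  have add: "(- p / q) powi n * (- p / q) powi l = (- p / q) powi (n + l)"
    using p q by (simp add: power_int_add)
  have "1 / (p + q) * (- p / q) powi n * ((1 - a * p) / (1 + a * q)) powi (- k)
        * ((1 - b / p) / (1 + b / q)) powi (- l) * ((1 - c * p) / (1 + c * q)) powi m
      = 1 / (p + q) * ((- p / q) powi n * (- p / q) powi l) * ((1 - a * p) / (1 + a * q)) powi (- k)
        * ((1 - 1 / b * p) / (1 + 1 / b * q)) powi (- l) * ((1 - c * p) / (1 + c * q)) powi m"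
    unfolding Bp by (simp add: ac_simps)
  also have "\<dots> = 1 / (p + q) * (- p / q) powi (n + l) * ((1 - a * p) / (1 + a * q)) powi (- k)
        * ((1 - 1 / b * p) / (1 + 1 / b * q)) powi (- l) * ((1 - c * p) / (1 + c * q)) powi m"
    unfolding add ..
  also have "\<dots> = ((1 - a * p) powi (- k) * (- p) powi (n + l) * (1 - 1 / b * p) powi (- l) * (1 - c * p) powi m)
        * ((1 + a * q) powi k * q powi (- (n + l)) * (1 + 1 / b * q) powi l * (1 + c * q) powi (- m)) / (p + q)"
    by (rule entG[OF q assms(4) bq' assms(6)])
  finally show ?thesis .
qed


lemma gram_bil:
  fixes a b c :: complex and N :: nat and p q :: "nat \<Rightarrow> complex" and C :: "nat \<Rightarrow> nat \<Rightarrow> complex"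
  assumes a: "a \<noteq> 0" and b: "b \<noteq> 0" and c: "c \<noteq> 0" and N: "N \<ge> 1"
    and pn: "\<And>i. i < N \<Longrightarrow> p i \<noteq> 0" and qn: "\<And>j. j < N \<Longrightarrow> q j \<noteq> 0"
    and ppq: "\<And>i j. i < N \<Longrightarrow> j < N \<Longrightarrow> p i + q j \<noteq> 0"
    and nz: "\<forall>i<N. 1 - a * p i \<noteq> 0 \<and> 1 - b / p i \<noteq> 0 \<and> 1 - c * p i \<noteq> 0
             \<and> 1 + a * q i \<noteq> 0 \<and> 1 + b / q i \<noteq> 0 \<and> 1 + c * q i \<noteq> 0"
  shows "bilinear_eqs a b c (tau_gram a b c N p q C)"
  unfolding bilinear_eqs_def
proof (intro allI conjI)
  fix n k l m :: int
  have N1: "1 \<le> N" using N by simp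
  have pq: "\<And>i. i < N \<Longrightarrow> p i \<noteq> 0 \<and> q i \<noteq> 0" using pn qn by auto
  have nz2: "\<And>i. i < N \<Longrightarrow> 1 - a * p i \<noteq> 0 \<and> 1 + a * q i \<noteq> 0 \<and> 1 - c * p i \<noteq> 0 \<and> 1 + c * q i \<noteq> 0"
    using nz by auto
  interpret g2: gram N p q "\<lambda>i. (1 - b / p i) powi (- l)" "\<lambda>j. (1 + b / q j) powi l" C a c
    by (unfold_locales; (rule N1 a c pq ppq nz2)?; simp_all add: pq ppq nz2)
  have t2: "tau_gram a b c N p q C s x l y = g2.G s x y" for s x y
    unfolding tau_gram_def g2.G_def g2.W_def g2.Z_def
  proof (rule det_mat_cong)
    fix i j assume i: "i < N" and j: "j < N"
    have h: "q j \<noteq> 0" "1 + a * q j \<noteq> 0" "1 + b / q j \<noteq> 0" "1 + c * q j \<noteq> 0" using nz qn j by auto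
    show "(\<lambda>(i, j). C i j + 1 / (p i + q j) * (- p i / q j) powi s * ((1 - a * p i) / (1 + a * q j)) powi - x *
                ((1 - b / p i) / (1 + b / q j)) powi - l * ((1 - c * p i) / (1 + c * q j)) powi y) (i, j) =
          (\<lambda>(i, j). C i j + (1 - b / p i) powi - l * (- p i) powi s * (1 - a * p i) powi - x * (1 - c * p i) powi y *
                ((1 + b / q j) powi l * q j powi - s * (1 + a * q j) powi x * (1 + c * q j) powi - y) / (p i + q j)) (i, j)"
      using ent2[OF h, of "p i" s x l y] by simp
  qed
  show "tau_gram a b c N p q C (n + 1) k l (m - 1) * tau_gram a b c N p q C n (k + 1) l m -
        a / c * tau_gram a b c N p q C (n + 1) (k + 1) l m * tau_gram a b c N p q C n k l (m - 1) =
        (1 - a / c) * tau_gram a b c N p q C n k l m * tau_gram a b c N p q C (n + 1) (k + 1) l (m - 1)"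
    unfolding t2 by (rule g2.main)
next
  fix n k l m :: int
  show "tau_gram a b c N p q C n k (l + 1) m * tau_gram a b c N p q C n k l (m - 1) -
        b * c * tau_gram a b c N p q C (n + 1) k l (m - 1) * tau_gram a b c N p q C (n - 1) k (l + 1) m =
        (1 - b * c) * tau_gram a b c N p q C n k l m * tau_gram a b c N p q C n k (l + 1) (m - 1)"
  proof -
    have N1: "1 \<le> N" using N by simp
    have pq: "\<And>i. i < N \<Longrightarrow> p i \<noteq> 0 \<and> q i \<noteq> 0" using pn qn by auto
    have nzb: "1 - 1 / b * p i \<noteq> 0 \<and> 1 + 1 / b * q i \<noteq> 0" if i: "i < N" for i
    proof
      show "1 - 1 / b * p i \<noteq> 0"
      proof
        assume "1 - 1 / b * p i = 0"
        hence "p i = b" using b by (simp add: field_simps)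
        thus False using nz i b by auto
      qed
      show "1 + 1 / b * q i \<noteq> 0"
      proof
        assume "1 + 1 / b * q i = 0"
        hence "b + q i = 0" using b by (simp add: field_simps)
        hence "q i = - b" by (simp add: add_eq_0_iff)
        thus False using nz i b by auto
      qed
    qed
    have nz1: "\<And>i. i < N \<Longrightarrow> 1 - 1 / b * p i \<noteq> 0 \<and> 1 + 1 / b * q i \<noteq> 0 \<and> 1 - c * p i \<noteq> 0 \<and> 1 + c * q i \<noteq> 0"
      using nz nzb by auto
    have bb: "1 / b \<noteq> 0" using b by simp
    interpret g1: gram N p q "\<lambda>i. (1 - a * p i) powi (- k)" "\<lambda>j. (1 + a * q j) powi k" C "1 / b" c
      by (unfold_locales; (rule N1 bb c pq ppq nz1)?; simp_all add: pq ppq nz1)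
    have t1: "tau_gram a b c N p q C s k x y = g1.G (s + x) x y" for s x y
      unfolding tau_gram_def g1.G_def g1.W_def g1.Z_def
    proof (rule det_mat_cong)
      fix i j assume i: "i < N" and j: "j < N"
      have h: "p i \<noteq> 0" "q j \<noteq> 0" "b \<noteq> 0" "1 + a * q j \<noteq> 0" "1 + b / q j \<noteq> 0" "1 + c * q j \<noteq> 0"
        using nz qn pn i j b by auto
      show "(\<lambda>(i, j). C i j + 1 / (p i + q j) * (- p i / q j) powi s * ((1 - a * p i) / (1 + a * q j)) powi - k *
                ((1 - b / p i) / (1 + b / q j)) powi - x * ((1 - c * p i) / (1 + c * q j)) powi y) (i, j) =
            (\<lambda>(i, j). C i j + (1 - a * p i) powi - k * (- p i) powi (s + x) * (1 - 1 / b * p i) powi - x * (1 - c * p i) powi y *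
                ((1 + a * q j) powi k * q j powi - (s + x) * (1 + 1 / b * q j) powi x * (1 + c * q j) powi - y) / (p i + q j)) (i, j)"
        using ent1[OF h, of s k x y] by simp
    qed
    have r1: "tau_gram a b c N p q C n k (l + 1) m = g1.G (n + l + 1) (l + 1) m" using t1[of n "l+1" m] by (simp add: ac_simps)
    have r2: "tau_gram a b c N p q C n k l (m - 1) = g1.G (n + l) l (m - 1)" using t1[of n l "m-1"] by simp
    have r3: "tau_gram a b c N p q C (n + 1) k l (m - 1) = g1.G (n + l + 1) l (m - 1)" using t1[of "n+1" l "m-1"] by (simp add: ac_simps)
    have r4: "tau_gram a b c N p q C (n - 1) k (l + 1) m = g1.G (n + l) (l + 1) m" using t1[of "n-1" "l+1" m] by (simp add: ac_simps)
    have r5: "tau_gram a b c N p q C n k l m = g1.G (n + l) l m" using t1[of n l m] by simp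
    have r6: "tau_gram a b c N p q C n k (l + 1) (m - 1) = g1.G (n + l + 1) (l + 1) (m - 1)" using t1[of n "l+1" "m-1"] by (simp add: ac_simps)
    note m1 = g1.main[of "n + l" l m]
    show ?thesis unfolding r1 r2 r3 r4 r5 r6
      by (rule alg4[of 1 1, OF _ _ b c]) (use m1 in simp_all)
  qed
qed


theorem proposition1:
  fixes a b c :: complex and N :: nat and p q :: "nat \<Rightarrow> complex"
    and C :: "nat \<Rightarrow> nat \<Rightarrow> complex" and cc d :: "nat \<Rightarrow> complex"
  assumes "a \<noteq> 0" "b \<noteq> 0" "c \<noteq> 0" "N \<ge> 1"
    and "\<And>i. i < N \<Longrightarrow> p i \<noteq> 0" "\<And>j. j < N \<Longrightarrow> q j \<noteq> 0"
    and "\<And>i j. i < N \<Longrightarrow> j < N \<Longrightarrow> p i + q j \<noteq> 0"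
  shows "((\<forall>i<N. 1 - a * p i \<noteq> 0 \<and> 1 - b / p i \<noteq> 0 \<and> 1 - c * p i \<noteq> 0
             \<and> 1 + a * q i \<noteq> 0 \<and> 1 + b / q i \<noteq> 0 \<and> 1 + c * q i \<noteq> 0)
          \<longrightarrow> bilinear_eqs a b c (tau_gram a b c N p q C))
       \<and> ((\<forall>i<N. 1 - a * p i \<noteq> 0 \<and> 1 - b / p i \<noteq> 0 \<and> 1 - c * p i \<noteq> 0
             \<and> 1 - a * q i \<noteq> 0 \<and> 1 - b / q i \<noteq> 0 \<and> 1 - c * q i \<noteq> 0)
          \<longrightarrow> bilinear_eqs a b c (tau_cas a b c N p q cc d))"
proof (intro conjI impI)
  assume h: "\<forall>i<N. 1 - a * p i \<noteq> 0 \<and> 1 - b / p i \<noteq> 0 \<and> 1 - c * p i \<noteq> 0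
             \<and> 1 + a * q i \<noteq> 0 \<and> 1 + b / q i \<noteq> 0 \<and> 1 + c * q i \<noteq> 0"
  show "bilinear_eqs a b c (tau_gram a b c N p q C)"
    by (rule gram_bil[OF assms(1-4) assms(5) assms(6) assms(7) h])
next
  assume h: "\<forall>i<N. 1 - a * p i \<noteq> 0 \<and> 1 - b / p i \<noteq> 0 \<and> 1 - c * p i \<noteq> 0
             \<and> 1 - a * q i \<noteq> 0 \<and> 1 - b / q i \<noteq> 0 \<and> 1 - c * q i \<noteq> 0"
  interpret cs: cas_setup a b c N p q cc d
    by (unfold_locales, insert assms h, auto)
  show "bilinear_eqs a b c (tau_cas a b c N p q cc d)" by (rule cs.bil)
qed

end
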